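(* Let $\mathcal{M}=\mathcal{M}_{3,3}$ and for $p\in\Delta_7$ let $D(p\|\mathcal{M})=\min_{q\in\mathcal{M}}D(p\|q)$. Then $\max_{p\in\Delta_7}D(p\|\mathcal{M})=\tfrac12\log2$, and the maximum is attained exactly at $u^+=\tfrac14(\delta_{000}+\delta_{011}+\delta_{101}+\delta_{110})$ and $u^-=\tfrac14(\delta_{001}+\delta_{010}+\delta_{100}+\delta_{111})$. Moreover the set of minimizers of $D(u^+\|q)$ over $q\in\mathcal{M}$ consists of exactly the six distributions $\tfrac18(\delta_{000}+\delta_{001}+\delta_{010}+\delta_{011})+\tfrac14(\delta_{101}+\delta_{110})$, $\tfrac18(\delta_{100}+\delta_{101}+\delta_{110}+\delta_{111})+\tfrac14(\delta_{011}+\delta_{000})$, $\tfrac18(\delta_{000}+\delta_{001}+\delta_{100}+\delta_{101})+\tfrac14(\delta_{011}+\delta_{110})$, $\tfrac18(\delta_{010}+\delta_{011}+\delta_{110}+\delta_{111})+\tfrac14(\delta_{000}+\delta_{101})$, $\tfrac18(\delta_{000}+\delta_{010}+\delta_{100}+\delta_{110})+\tfrac14(\delta_{011}+\delta_{101})$, $\tfrac18(\delta_{001}+\delta_{011}+\delta_{101}+\delta_{111})+\tfrac14(\delta_{000}+\delta_{110})$, one lying in each of the six sets $\{q\in\Delta_7: d_{i,j}(q)=0\}$; the minimizers for $u^-$ are given analogously.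
   Context: $\Delta_7$ is the set of $2\times2\times2$ tensors $p=(p_{ijk})$ with nonnegative entries summing to $1$; $\delta_x$ denotes the point mass at $x\in\{0,1\}^3$. $\mathcal{M}_{3,3}$ is the set of $p\in\Delta_7$ that are a sum of three tensors $a\otimes b\otimes c$ (entries $a_ib_jc_k$) with $a,b,c\in\mathbb{R}^2_{\ge0}$. The Kullback–Leibler divergence is $D(p\|q)=\sum_x p_x\log(p_x/q_x)$ with $0\log(0/q)=0$ and value $+\infty$ if $p_x>0=q_x$ for some $x$. The slice determinants are $d_{1,0}=p_{000}p_{011}-p_{001}p_{010}$, $d_{1,1}=p_{100}p_{111}-p_{101}p_{110}$, $d_{2,0}=p_{000}p_{101}-p_{001}p_{100}$, $d_{2,1}=p_{010}p_{111}-p_{011}p_{110}$, $d_{3,0}=p_{000}p_{110}-p_{010}p_{100}$, $d_{3,1}=p_{001}p_{111}-p_{011}p_{101}$. *)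

theory Defs
  imports "HOL-Analysis.Analysis"
begin

text \<open>A 2x2x2 tensor is a function on triples of bits; the bit 0 is False, 1 is True.
  So p (False,True,True) is the entry p_011.\<close>

type_synonym tensor = "bool \<times> bool \<times> bool \<Rightarrow> real"

definition simplex7 :: "tensor set" where
  "simplex7 = {p. (\<forall>x. 0 \<le> p x) \<and> (\<Sum>x\<in>UNIV. p x) = 1}"

definition M33 :: "tensor set" where
  "M33 = {p \<in> simplex7. \<exists>a b c :: nat \<Rightarrow> bool \<Rightarrow> real.
      (\<forall>r i. 0 \<le> a r i \<and> 0 \<le> b r i \<and> 0 \<le> c r i) \<and>
      (\<forall>i j k. p (i, j, k) = (\<Sum>r<3. a r i * b r j * c r k))}"

definition KL :: "tensor \<Rightarrow> tensor \<Rightarrow> ereal" where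
  "KL p q = (if \<exists>x. p x > 0 \<and> q x = 0 then \<infinity>
             else ereal (\<Sum>x\<in>UNIV. if p x = 0 then 0 else p x * ln (p x / q x)))"

definition KL_model :: "tensor \<Rightarrow> ereal" where
  "KL_model p = (INF q\<in>M33. KL p q)"

definition slice_det :: "nat \<Rightarrow> bool \<Rightarrow> tensor \<Rightarrow> real" where
  "slice_det m j p =
    (if m = 1 then p (j,False,False) * p (j,True,True) - p (j,False,True) * p (j,True,False)
     else if m = 2 then p (False,j,False) * p (True,j,True) - p (False,j,True) * p (True,j,False)
     else p (False,False,j) * p (True,True,j) - p (False,True,j) * p (True,False,j))"

definition u_plus :: tensor where
  "u_plus = (\<lambda>x. if x \<in> {(False,False,False),(False,True,True),(True,False,True),(True,True,False)}
                 then 1/4 else 0)"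

definition u_minus :: tensor where
  "u_minus = (\<lambda>x. if x \<in> {(False,False,True),(False,True,False),(True,False,False),(True,True,True)}
                 then 1/4 else 0)"

definition mix :: "(bool \<times> bool \<times> bool) set \<Rightarrow> (bool \<times> bool \<times> bool) set \<Rightarrow> tensor" where
  "mix A B = (\<lambda>x. if x \<in> A then 1/8 else if x \<in> B then 1/4 else 0)"

definition q10 :: tensor where
  "q10 = mix {(False,False,False),(False,False,True),(False,True,False),(False,True,True)}
             {(True,False,True),(True,True,False)}"
definition q11 :: tensor where
  "q11 = mix {(True,False,False),(True,False,True),(True,True,False),(True,True,True)}
             {(False,True,True),(False,False,False)}"
definition q20 :: tensor where
  "q20 = mix {(False,False,False),(False,False,True),(True,False,False),(True,False,True)}
             {(False,True,True),(True,True,False)}"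
definition q21 :: tensor where
  "q21 = mix {(False,True,False),(False,True,True),(True,True,False),(True,True,True)}
             {(False,False,False),(True,False,True)}"
definition q30 :: tensor where
  "q30 = mix {(False,False,False),(False,True,False),(True,False,False),(True,True,False)}
             {(False,True,True),(True,False,True)}"
definition q31 :: tensor where
  "q31 = mix {(False,False,True),(False,True,True),(True,False,True),(True,True,True)}
             {(False,False,False),(True,True,False)}"

text \<open>Flipping the first index; it maps u_plus to u_minus and preserves M33 and KL.\<close>
definition flip1 :: "tensor \<Rightarrow> tensor" where
  "flip1 q = (\<lambda>(i, j, k). q (\<not> i, j, k))"

end

theory Submission
  imports Defs
begin


lemma UNIV8: "(UNIV :: (bool\<times>bool\<times>bool) set) = {(False,False,False), (False,False,True), (False,True,False), (False,True,True),
   (True,False,False), (True,False,True), (True,True,False), (True,True,True)}"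
  by (auto; case_tac a; case_tac aa; case_tac b; auto)

lemma sum8: "(\<Sum>x\<in>UNIV. f x) = f (False,False,False) + f (False,False,True) + f (False,True,False) + f (False,True,True)
   + f (True,False,False) + f (True,False,True) + f (True,True,False) + (f (True,True,True)::real)"
  by (simp add: UNIV8 add.assoc)

lemma ex8: "(\<exists>x::bool\<times>bool\<times>bool. P x) \<longleftrightarrow> P (False,False,False) \<or> P (False,False,True) \<or> P (False,True,False) \<or> P (False,True,True)
   \<or> P (True,False,False) \<or> P (True,False,True) \<or> P (True,True,False) \<or> P (True,True,True)"
  by (simp add: UNIV8[symmetric, THEN eqset_imp_iff] ) (metis (full_types) UNIV8 UNIV_I empty_iff insert_iff)

lemma tensor_eq8:
  fixes f g :: tensor
  assumes "f (False,False,False) = g (False,False,False)" "f (False,False,True) = g (False,False,True)" "f (False,True,False) = g (False,True,False)" "f (False,True,True) = g (False,True,True)"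
   "f (True,False,False) = g (True,False,False)" "f (True,False,True) = g (True,False,True)" "f (True,True,False) = g (True,True,False)" "f (True,True,True) = g (True,True,True)"
  shows "f = g"
proof
  fix x :: "bool\<times>bool\<times>bool"
  have "x \<in> UNIV" by simp
  then show "f x = g x" unfolding UNIV8 using assms by auto
qed


lemma sum3: "(\<Sum>r<(3::nat). f r) = f 0 + f 1 + (f 2 :: real)"
  by (simp add: eval_nat_numeral)

definition QQ :: "(nat \<Rightarrow> bool \<Rightarrow> real) \<Rightarrow> (nat \<Rightarrow> bool \<Rightarrow> real) \<Rightarrow> (nat \<Rightarrow> bool \<Rightarrow> real) \<Rightarrow> bool \<Rightarrow> bool \<Rightarrow> bool \<Rightarrow> real" where
  "QQ a b c i j k = (\<Sum>r<3. a r i * b r j * c r k)"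

definition pat :: "(bool \<Rightarrow> bool \<Rightarrow> bool \<Rightarrow> real) \<Rightarrow> bool" where
  "pat Q \<longleftrightarrow>
     Q False False False * Q False True True - Q False False True * Q False True False > 0 \<and>
     Q True False False * Q True True True - Q True False True * Q True True False < 0 \<and>
     Q False False False * Q True False True - Q False False True * Q True False False > 0 \<and>
     Q False True False * Q True True True - Q False True True * Q True True False < 0 \<and>
     Q False False False * Q True True False - Q False True False * Q True False False > 0 \<and>
     Q False False True * Q True True True - Q False True True * Q True False True < 0"

definition dt :: "(nat \<Rightarrow> bool \<Rightarrow> real) \<Rightarrow> nat \<Rightarrow> nat \<Rightarrow> real" where
  "dt a u v = a u False * a v True - a u True * a v False"

lemma det3:
  fixes x0 x1 x2 b0F b0T b1F b1T b2F b2T c0F c0T c1F c1T c2F c2T :: real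
  shows "(x0*b0F*c0F + x1*b1F*c1F + x2*b2F*c2F) * (x0*b0T*c0T + x1*b1T*c1T + x2*b2T*c2T)
       - (x0*b0F*c0T + x1*b1F*c1T + x2*b2F*c2T) * (x0*b0T*c0F + x1*b1T*c1F + x2*b2T*c2F)
    = x0*x1*((b0F*b1T - b0T*b1F)*(c0F*c1T - c0T*c1F)) + x0*x2*((b0F*b2T - b0T*b2F)*(c0F*c2T - c0T*c2F))
      + x1*x2*((b1F*b2T - b1T*b2F)*(c1F*c2T - c1T*c2F))"
  by algebra

lemma convex_aux:
  fixes aa bb cc y mm :: real
  assumes "aa > 0" "cc < 0" "0 \<le> y" "y \<le> mm" "cc + mm*bb + mm*mm*aa < 0"
  shows "cc + y*bb + y*y*aa < 0"
proof (cases "mm = 0")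
  case True then show ?thesis using assms by auto
next
  case False
  then have mm: "mm > 0" using assms by linarith
  have "mm * (cc + y*bb + y*y*aa) = (mm - y) * cc + y * (cc + mm*bb + mm*mm*aa) - aa*y*(mm-y)*mm"
    by algebra
  also have "\<dots> < 0"
  proof -
    have "aa*y*(mm-y)*mm \<ge> 0" using assms mm by auto
    moreover have "(mm - y) * cc + y * (cc + mm*bb + mm*mm*aa) < 0"
    proof (cases "y = 0")
      case True then show ?thesis using assms mm by (simp add: mult_pos_neg)
    next
      case False
      then have "y > 0" using assms by linarith
      then have "y * (cc + mm*bb + mm*mm*aa) < 0" using assms by (simp add: mult_pos_neg)
      moreover have "(mm - y) * cc \<le> 0" using assms by (simp add: mult_nonneg_nonpos)
      ultimately show ?thesis by linarith
    qed
    ultimately show ?thesis by linarith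
  qed
  finally show ?thesis using mm by (simp add: mult_less_0_iff)
qed


lemma QQ3: "QQ a b c i j k = a 0 i * b 0 j * c 0 k + a 1 i * b 1 j * c 1 k + a 2 i * b 2 j * c 2 k"
  by (simp add: QQ_def sum3)

lemma less3: "(r::nat) < 3 \<longleftrightarrow> r = 0 \<or> r = 1 \<or> r = 2" by auto

lemma ratio_aux:
  fixes d M n e f :: real
  assumes "d > 0" "M * d = n" "e * n < d * f"
  shows "f - M * e > 0"
proof -
  have e1: "M * e * d = e * (M * d)" by (simp add: algebra_simps)
  have e2: "d * f = f * d" by simp
  have e3: "M * e * d = e * n" using e1 assms(2) by simp
  have "(M * e) * d < f * d" using e3 e2 assms(3) by linarith
  then show ?thesis using assms(1) by simp
qed

lemma pencil_min:
  assumes nn: "\<forall>r i. 0 \<le> a r i \<and> 0 \<le> b r i \<and> 0 \<le> c r i"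
  and P: "pat (QQ a b c)"
  and r: "r < 3" "a r False > 0" "\<forall>s<3. a r True * a s False \<le> a s True * a r False"
  shows "\<forall>s<3. s \<noteq> r \<longrightarrow> dt a r s > 0"
    and "\<forall>u<3. \<forall>v<3. u \<noteq> r \<longrightarrow> v \<noteq> r \<longrightarrow> u \<noteq> v \<longrightarrow> dt b u v * dt c u v < 0"
proof -
  define q where "q = QQ a b c"
  define \<sigma> where "\<sigma> = a r True / a r False"
  define x where "x s = a s True - \<sigma> * a s False" for s
  have ar: "a r True = \<sigma> * a r False" using r(2) by (simp add: \<sigma>_def)
  have xr: "x r = 0" using ar by (simp add: x_def)
  have xnn: "x s \<ge> 0" if "s < 3" for s
  proof -
    have "a r True * a s False \<le> a s True * a r False" using r(3) that by auto
    then have "\<sigma> * a s False * a r False \<le> a s True * a r False" using ar by (simp add: algebra_simps)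
    then have "\<sigma> * a s False \<le> a s True" using r(2) by simp
    then show ?thesis by (simp add: x_def)
  qed
  have sig0: "\<sigma> \<ge> 0" using nn r(2) by (simp add: \<sigma>_def)
  have key: "q True j k - \<sigma> * q False j k = x 0 * b 0 j * c 0 k + x 1 * b 1 j * c 1 k + x 2 * b 2 j * c 2 k" for j k
    by (simp add: q_def QQ3 x_def algebra_simps)
  have qnn: "q i j k \<ge> 0" for i j k using nn by (simp add: q_def QQ3)
  from P have P': "q False False False * q False True True - q False False True * q False True False > 0 \<and>
     q True False False * q True True True - q True False True * q True True False < 0 \<and>
     q False False False * q True False True - q False False True * q True False False > 0 \<and>
     q False True False * q True True True - q False True True * q True True False < 0 \<and>
     q False False False * q True True False - q False True False * q True False False > 0 \<and>
     q False False True * q True True True - q False True True * q True False True < 0"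
    by (simp add: pat_def q_def)
  define g where "g t = (q True False False - t * q False False False) * (q True True True - t * q False True True)
     - (q True False True - t * q False False True) * (q True True False - t * q False True False)" for t
  have gform: "g t = (q True False False * q True True True - q True False True * q True True False)
     + t * (q False True False * q True False True + q False False True * q True True False - q True False False * q False True True - q False False False * q True True True)
     + t * t * (q False False False * q False True True - q False False True * q False True False)" for t
    by (simp add: g_def algebra_simps)
  have q000: "q False False False > 0" and q011: "q False True True > 0"
  proof -
    have "q False False False * q False True True > 0" using P' qnn[of False False True] qnn[of False True False]
      using mult_nonneg_nonneg[of "q False False True" "q False True False"] by linarith
    then show "q False False False > 0" "q False True True > 0"
      using qnn[of False False False] qnn[of False True True] by (auto simp: zero_less_mult_iff)
  qed
  have gsig: "g \<sigma> = x 0 * x 1 * (dt b 0 1 * dt c 0 1) + x 0 * x 2 * (dt b 0 2 * dt c 0 2) + x 1 * x 2 * (dt b 1 2 * dt c 1 2)"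
  proof -
    have "g \<sigma> = (x 0 * b 0 False * c 0 False + x 1 * b 1 False * c 1 False + x 2 * b 2 False * c 2 False) *
                (x 0 * b 0 True * c 0 True + x 1 * b 1 True * c 1 True + x 2 * b 2 True * c 2 True) -
                (x 0 * b 0 False * c 0 True + x 1 * b 1 False * c 1 True + x 2 * b 2 False * c 2 True) *
                (x 0 * b 0 True * c 0 False + x 1 * b 1 True * c 1 False + x 2 * b 2 True * c 2 False)"
      by (simp add: g_def key)
    then show ?thesis by (simp add: det3 dt_def)
  qed
  define M where "M = max (q True False False / q False False False) (q True True True / q False True True)"
  have sigM: "\<sigma> \<le> M"
  proof -
    have "q True False False - \<sigma> * q False False False \<ge> 0"
      unfolding key using xnn nn by (simp add: less3)
    then have "\<sigma> \<le> q True False False / q False False False" using q000 by (simp add: field_simps)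
    then show ?thesis by (simp add: M_def)
  qed
  have gM: "g M < 0"
  proof (cases "q True False False / q False False False \<ge> q True True True / q False True True")
    case True
    then have M: "M = q True False False / q False False False" by (simp add: M_def)
    have Md: "M * q False False False = q True False False" using M q000 by simp
    have s00: "q True False False - M * q False False False = 0" using M q000 by simp
    have s01: "q True False True - M * q False False True > 0"
      by (rule ratio_aux[OF q000 Md]) (use P' in \<open>simp add: algebra_simps\<close>)
    have s10: "q True True False - M * q False True False > 0"
      by (rule ratio_aux[OF q000 Md]) (use P' in \<open>simp add: algebra_simps\<close>)
    show ?thesis unfolding g_def using s00 s01 s10 by (simp add: mult_pos_pos)
  next
    case False
    then have M: "M = q True True True / q False True True" by (simp add: M_def)
    have Md: "M * q False True True = q True True True" using M q011 by simp
    have s11: "q True True True - M * q False True True = 0" using M q011 by simp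
    have s01: "q True False True - M * q False False True > 0"
      by (rule ratio_aux[OF q011 Md]) (use P' in \<open>simp add: algebra_simps\<close>)
    have s10: "q True True False - M * q False True False > 0"
      by (rule ratio_aux[OF q011 Md]) (use P' in \<open>simp add: algebra_simps\<close>)
    show ?thesis unfolding g_def using s11 s01 s10 by (simp add: mult_pos_pos)
  qed
  have gneg: "g \<sigma> < 0" unfolding gform
    by (rule convex_aux[where mm=M]) (use P' sig0 sigM gM in \<open>simp_all add: gform\<close>)
  have dta: "dt a r s = a r False * x s" for s
    by (simp add: dt_def x_def ar algebra_simps)
  have dsym: "dt b v u * dt c v u = dt b u v * dt c u v" for u v by (simp add: dt_def algebra_simps)
  have x0: "x 0 \<ge> 0" and x1: "x 1 \<ge> 0" and x2: "x 2 \<ge> 0" using xnn by auto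
  have "(\<forall>s<3. s \<noteq> r \<longrightarrow> x s > 0) \<and> (\<forall>u<3. \<forall>v<3. u \<noteq> r \<longrightarrow> v \<noteq> r \<longrightarrow> u \<noteq> v \<longrightarrow> dt b u v * dt c u v < 0)"
  proof -
    consider "r = 0" | "r = 1" | "r = 2" using r(1) by (auto simp: less3)
    then show ?thesis
    proof cases
      case 1
      then have "x 1 * x 2 * (dt b 1 2 * dt c 1 2) < 0" using gneg gsig xr by simp
      then have "x 1 > 0 \<and> x 2 > 0 \<and> dt b 1 2 * dt c 1 2 < 0" using x1 x2
        by (auto simp: mult_less_0_iff zero_less_mult_iff)
      then show ?thesis using 1 dsym by (auto simp: less3)
    next
      case 2
      then have "x 0 * x 2 * (dt b 0 2 * dt c 0 2) < 0" using gneg gsig xr by simp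
      then have "x 0 > 0 \<and> x 2 > 0 \<and> dt b 0 2 * dt c 0 2 < 0" using x0 x2
        by (auto simp: mult_less_0_iff zero_less_mult_iff)
      then show ?thesis using 2 dsym by (auto simp: less3)
    next
      case 3
      then have "x 0 * x 1 * (dt b 0 1 * dt c 0 1) < 0" using gneg gsig xr by simp
      then have "x 0 > 0 \<and> x 1 > 0 \<and> dt b 0 1 * dt c 0 1 < 0" using x0 x1
        by (auto simp: mult_less_0_iff zero_less_mult_iff)
      then show ?thesis using 3 dsym by (auto simp: less3)
    qed
  qed
  then show "\<forall>s<3. s \<noteq> r \<longrightarrow> dt a r s > 0"
    and "\<forall>u<3. \<forall>v<3. u \<noteq> r \<longrightarrow> v \<noteq> r \<longrightarrow> u \<noteq> v \<longrightarrow> dt b u v * dt c u v < 0"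
    using dta r(2) by auto
qed


lemma trans_dt:
  fixes u0 u1 v0 v1 w0 w1 :: real
  assumes nn: "u0 \<ge> 0" "u1 \<ge> 0" "v0 \<ge> 0" "v1 \<ge> 0" "w0 \<ge> 0" "w1 \<ge> 0"
  and h1: "u0 * v1 - u1 * v0 > 0" and h2: "v0 * w1 - v1 * w0 > 0"
  shows "u0 * w1 - u1 * w0 > 0"
proof (rule ccontr)
  assume "\<not> ?thesis"
  then have D: "u0 * w1 - u1 * w0 \<le> 0" by simp
  have i0: "(u0 * w1 - u1 * w0) * v0 = (u0 * v1 - u1 * v0) * w0 + (v0 * w1 - v1 * w0) * u0" by algebra
  have i1: "(u0 * w1 - u1 * w0) * v1 = (u0 * v1 - u1 * v0) * w1 + (v0 * w1 - v1 * w0) * u1" by algebra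
  have l0: "(u0 * w1 - u1 * w0) * v0 \<le> 0" using D nn by (simp add: mult_nonpos_nonneg)
  have l1: "(u0 * w1 - u1 * w0) * v1 \<le> 0" using D nn by (simp add: mult_nonpos_nonneg)
  have a1: "(u0 * v1 - u1 * v0) * w0 \<ge> 0" "(v0 * w1 - v1 * w0) * u0 \<ge> 0"
    "(u0 * v1 - u1 * v0) * w1 \<ge> 0" "(v0 * w1 - v1 * w0) * u1 \<ge> 0" using h1 h2 nn by simp_all
  have "(v0 * w1 - v1 * w0) * u0 = 0" "(v0 * w1 - v1 * w0) * u1 = 0" using i0 i1 l0 l1 a1 by linarith+
  then have "u0 = 0" "u1 = 0" using h2 by simp_all
  then show False using h1 by simp
qed

definition flp :: "(nat \<Rightarrow> bool \<Rightarrow> real) \<Rightarrow> nat \<Rightarrow> bool \<Rightarrow> real" where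
  "flp a r i = a r (\<not> i)"

lemma QQ_flp: "QQ (flp a) (flp b) c i j k = QQ a b c (\<not> i) (\<not> j) k"
  by (simp add: QQ_def flp_def)

lemma pat_flp: "pat (QQ a b c) \<Longrightarrow> pat (QQ (flp a) (flp b) c)"
  unfolding pat_def QQ_flp by (simp add: algebra_simps)

lemma pencil_max:
  assumes nn: "\<forall>r i. 0 \<le> a r i \<and> 0 \<le> b r i \<and> 0 \<le> c r i"
  and P: "pat (QQ a b c)"
  and r: "r < 3" "a r True > 0" "\<forall>s<3. a r False * a s True \<le> a s False * a r True"
  shows "\<forall>s<3. s \<noteq> r \<longrightarrow> dt a s r > 0"
    and "\<forall>u<3. \<forall>v<3. u \<noteq> r \<longrightarrow> v \<noteq> r \<longrightarrow> u \<noteq> v \<longrightarrow> dt b u v * dt c u v > 0"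
proof -
  have nn': "\<forall>r i. 0 \<le> flp a r i \<and> 0 \<le> flp b r i \<and> 0 \<le> c r i" using nn by (simp add: flp_def)
  have r': "flp a r False > 0" "\<forall>s<3. flp a r True * flp a s False \<le> flp a s True * flp a r False"
    using r by (simp_all add: flp_def)
  note m = pencil_min[OF nn' pat_flp[OF P] r(1) r']
  have e1: "dt (flp a) r s = dt a s r" for s by (simp add: dt_def flp_def algebra_simps)
  have e2: "dt (flp b) u v * dt c u v = - (dt b u v * dt c u v)" for u v by (simp add: dt_def flp_def algebra_simps)
  show "\<forall>s<3. s \<noteq> r \<longrightarrow> dt a s r > 0" using m(1) e1 by simp
  show "\<forall>u<3. \<forall>v<3. u \<noteq> r \<longrightarrow> v \<noteq> r \<longrightarrow> u \<noteq> v \<longrightarrow> dt b u v * dt c u v > 0"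
    using m(2) e2 by fastforce
qed

lemma mode2:
  "QQ a b c False j False * QQ a b c True j True - QQ a b c False j True * QQ a b c True j False
   = b 0 j * b 1 j * (dt a 0 1 * dt c 0 1) + b 0 j * b 2 j * (dt a 0 2 * dt c 0 2) + b 1 j * b 2 j * (dt a 1 2 * dt c 1 2)"
  unfolding QQ3 dt_def by algebra

lemma mode3:
  "QQ a b c False False k * QQ a b c True True k - QQ a b c False True k * QQ a b c True False k
   = c 0 k * c 1 k * (dt a 0 1 * dt b 0 1) + c 0 k * c 2 k * (dt a 0 2 * dt b 0 2) + c 1 k * c 2 k * (dt a 1 2 * dt b 1 2)"
  unfolding QQ3 dt_def by algebra

lemma finish:
  assumes nn: "\<forall>r i. 0 \<le> a r i \<and> 0 \<le> b r i \<and> 0 \<le> c r i"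
  and P: "pat (QQ a b c)"
  and A: "dt a 0 1 > 0" "dt a 0 2 > 0" "dt a 1 2 > 0"
  and E: "dt b 1 2 * dt c 1 2 < 0" "dt b 0 1 * dt c 0 1 > 0"
  shows False
proof -
  have d20: "QQ a b c False False False * QQ a b c True False True - QQ a b c False False True * QQ a b c True False False > 0"
   and d21: "QQ a b c False True False * QQ a b c True True True - QQ a b c False True True * QQ a b c True True False < 0"
   and d30: "QQ a b c False False False * QQ a b c True True False - QQ a b c False True False * QQ a b c True False False > 0"
   and d31: "QQ a b c False False True * QQ a b c True True True - QQ a b c False True True * QQ a b c True False True < 0"
    using P by (simp_all add: pat_def)
  note m20 = mode2[of a b c False] and m21 = mode2[of a b c True]
  note m30 = mode3[of a b c False] and m31 = mode3[of a b c True]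
  have tb: "dt b 0 2 > 0" if "dt b 0 1 > 0" "dt b 1 2 > 0"
    using trans_dt[of "b 0 False" "b 0 True" "b 1 False" "b 1 True" "b 2 False" "b 2 True"] that nn
    by (simp add: dt_def)
  have tb': "dt b 0 2 < 0" if "dt b 0 1 < 0" "dt b 1 2 < 0"
    using trans_dt[of "b 2 False" "b 2 True" "b 1 False" "b 1 True" "b 0 False" "b 0 True"] that nn
    by (simp add: dt_def algebra_simps)
  have tc: "dt c 0 2 > 0" if "dt c 0 1 > 0" "dt c 1 2 > 0"
    using trans_dt[of "c 0 False" "c 0 True" "c 1 False" "c 1 True" "c 2 False" "c 2 True"] that nn
    by (simp add: dt_def)
  have tc': "dt c 0 2 < 0" if "dt c 0 1 < 0" "dt c 1 2 < 0"
    using trans_dt[of "c 2 False" "c 2 True" "c 1 False" "c 1 True" "c 0 False" "c 0 True"] that nn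
    by (simp add: dt_def algebra_simps)
  have nnp: "\<And>r s i. 0 \<le> b r i * b s i" "\<And>r s i. 0 \<le> c r i * c s i"
    using nn by simp_all
  consider "dt b 0 1 > 0" "dt c 0 1 > 0" | "dt b 0 1 < 0" "dt c 0 1 < 0" using E(2)
    by (auto simp: zero_less_mult_iff)
  then show False
  proof cases
    case 1
    note H = this
    consider "dt b 1 2 > 0" "dt c 1 2 < 0" | "dt b 1 2 < 0" "dt c 1 2 > 0" using E(1)
      by (auto simp: mult_less_0_iff)
    then show False
    proof cases
      case 1
      have "dt b 0 2 > 0" using tb H 1 by simp
      then have "c 0 True * c 1 True * (dt a 0 1 * dt b 0 1) + c 0 True * c 2 True * (dt a 0 2 * dt b 0 2) + c 1 True * c 2 True * (dt a 1 2 * dt b 1 2) \<ge> 0"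
        using A H 1 nn by (intro add_nonneg_nonneg mult_nonneg_nonneg) auto
      then show False using d31 m31 by simp
    next
      case 2
      have "dt c 0 2 > 0" using tc H 2 by simp
      then have "b 0 True * b 1 True * (dt a 0 1 * dt c 0 1) + b 0 True * b 2 True * (dt a 0 2 * dt c 0 2) + b 1 True * b 2 True * (dt a 1 2 * dt c 1 2) \<ge> 0"
        using A H 2 nn by (intro add_nonneg_nonneg mult_nonneg_nonneg) auto
      then show False using d21 m21 by simp
    qed
  next
    case 2
    note H = this
    consider "dt b 1 2 > 0" "dt c 1 2 < 0" | "dt b 1 2 < 0" "dt c 1 2 > 0" using E(1)
      by (auto simp: mult_less_0_iff)
    then show False
    proof cases
      case 1
      have "dt c 0 2 < 0" using tc' H 1 by simp
      then have "b 0 False * b 1 False * (dt a 0 1 * dt c 0 1) + b 0 False * b 2 False * (dt a 0 2 * dt c 0 2) + b 1 False * b 2 False * (dt a 1 2 * dt c 1 2) \<le> 0"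
        using A H 1 nn by (intro add_nonpos_nonpos mult_nonneg_nonpos) (auto simp: mult_pos_neg)
      then show False using d20 m20 by simp
    next
      case 2
      have "dt b 0 2 < 0" using tb' H 2 by simp
      then have "c 0 False * c 1 False * (dt a 0 1 * dt b 0 1) + c 0 False * c 2 False * (dt a 0 2 * dt b 0 2) + c 1 False * c 2 False * (dt a 1 2 * dt b 1 2) \<le> 0"
        using A H 2 nn by (intro add_nonpos_nonpos mult_nonneg_nonpos) (auto simp: mult_pos_neg)
      then show False using d30 m30 by simp
    qed
  qed
qed


lemma ex_min_ratio:
  fixes x y :: "nat \<Rightarrow> real"
  assumes nx: "\<forall>r. x r \<ge> 0" and ny: "\<forall>r. y r \<ge> 0" and ex: "\<exists>r<3. x r > 0"
  shows "\<exists>r<3. x r > 0 \<and> (\<forall>s<3. y r * x s \<le> y s * x r)"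
proof -
  define S where "S = {r. r < 3 \<and> x r > 0}"
  define f where "f r = y r / x r" for r
  have fin: "finite S" unfolding S_def by auto
  have ne: "S \<noteq> {}" using ex unfolding S_def by auto
  have "Min (f ` S) \<in> f ` S" using fin ne by (intro Min_in) auto
  then obtain r where rS: "r \<in> S" and rm: "f r = Min (f ` S)" by (metis imageE)
  have "y r * x s \<le> y s * x r" if s: "s < 3" for s
  proof (cases "x s > 0")
    case True
    then have "s \<in> S" using s by (simp add: S_def)
    then have "f r \<le> f s" using rm fin by simp
    then have "y r / x r \<le> y s / x s" by (simp add: f_def)
    then show ?thesis using True rS by (simp add: S_def divide_simps mult.commute)
  next
    case False
    then have "x s = 0" using nx by (metis less_eq_real_def)
    then show ?thesis using ny nx by simp
  qed
  then show ?thesis using rS by (auto simp: S_def)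
qed

lemma sign_lemma:
  assumes nn: "\<forall>r i. 0 \<le> a r i \<and> 0 \<le> b r i \<and> 0 \<le> c r i"
  shows "\<not> pat (QQ a b c)"
proof
  assume P: "pat (QQ a b c)"
  have d10: "QQ a b c False False False * QQ a b c False True True - QQ a b c False False True * QQ a b c False True False > 0"
   and d11: "QQ a b c True False False * QQ a b c True True True - QQ a b c True False True * QQ a b c True True False < 0"
    using P by (simp_all add: pat_def)
  have ex0: "\<exists>r<3. a r False > 0"
  proof (rule ccontr)
    assume "\<not> ?thesis"
    then have "a r False = 0" if "r < 3" for r using nn that by (metis less_eq_real_def)
    then have "QQ a b c False j k = 0" for j k by (simp add: QQ3)
    then show False using d10 by simp
  qed
  have ex1: "\<exists>r<3. a r True > 0"
  proof (rule ccontr)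
    assume "\<not> ?thesis"
    then have "a r True = 0" if "r < 3" for r using nn that by (metis less_eq_real_def)
    then have "QQ a b c True j k = 0" for j k by (simp add: QQ3)
    then show False using d11 by simp
  qed
  obtain lo where lo: "lo < 3" "a lo False > 0" "\<forall>s<3. a lo True * a s False \<le> a s True * a lo False"
    using ex_min_ratio[of "\<lambda>r. a r False" "\<lambda>r. a r True"] nn ex0 by auto
  obtain hi where hi: "hi < 3" "a hi True > 0" "\<forall>s<3. a hi False * a s True \<le> a s False * a hi True"
    using ex_min_ratio[of "\<lambda>r. a r True" "\<lambda>r. a r False"] nn ex1 by auto
  note mn = pencil_min[OF nn P lo] and mx = pencil_max[OF nn P hi]
  have ne: "lo \<noteq> hi"
  proof
    assume eq: "lo = hi"
    obtain u v where uv: "u < 3" "v < 3" "u \<noteq> lo" "v \<noteq> lo" "u \<noteq> v"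
    proof -
      consider "lo = 0" | "lo = 1" | "lo = 2" using lo(1) by (auto simp: less3)
      then show ?thesis
      proof cases
        case 1 then show ?thesis using that[of 1 2] by simp
      next
        case 2 then show ?thesis using that[of 0 2] by simp
      next
        case 3 then show ?thesis using that[of 0 1] by simp
      qed
    qed
    have "dt b u v * dt c u v < 0" using mn(2) uv by simp
    moreover have "dt b u v * dt c u v > 0" using mx(2) uv eq by simp
    ultimately show False by simp
  qed
  define mid where "mid = 3 - lo - hi"
  define p where "p r = (if r = 0 then lo else if r = 1 then mid else hi)" for r :: nat
  define a' b' c' where "a' r = a (p r)" and "b' r = b (p r)" and "c' r = c (p r)" for r
  have perm: "(lo = 0 \<and> mid = 1 \<and> hi = 2) \<or> (lo = 0 \<and> mid = 2 \<and> hi = 1) \<or> (lo = 1 \<and> mid = 0 \<and> hi = 2)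
     \<or> (lo = 1 \<and> mid = 2 \<and> hi = 0) \<or> (lo = 2 \<and> mid = 0 \<and> hi = 1) \<or> (lo = 2 \<and> mid = 1 \<and> hi = 0)"
    using lo(1) hi(1) ne unfolding mid_def by (auto simp: less3)
  have QQe: "QQ a' b' c' = QQ a b c"
    using perm by (auto simp: fun_eq_iff QQ3 a'_def b'_def c'_def p_def)
  have mid3: "mid < 3" "mid \<noteq> lo" "mid \<noteq> hi" using perm by auto
  have nn': "\<forall>r i. 0 \<le> a' r i \<and> 0 \<le> b' r i \<and> 0 \<le> c' r i" using nn by (simp add: a'_def b'_def c'_def)
  show False
  proof (rule finish[OF nn'])
    show "pat (QQ a' b' c')" using P QQe by simp
    show "dt a' 0 1 > 0" using mn(1) mid3 by (simp add: dt_def a'_def p_def)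
    show "dt a' 0 2 > 0" using mn(1) hi(1) ne by (simp add: dt_def a'_def p_def)
    show "dt a' 1 2 > 0" using mx(1) mid3 by (simp add: dt_def a'_def p_def)
    show "dt b' 1 2 * dt c' 1 2 < 0" using mn(2) mid3 hi(1) ne by (simp add: dt_def b'_def c'_def p_def)
    show "dt b' 0 1 * dt c' 0 1 > 0" using mx(2) mid3 lo(1) ne by (simp add: dt_def b'_def c'_def p_def)
  qed
qed


lemma face:
  fixes A B X Y C D Z W :: real
  assumes nn: "A \<ge> 0" "B \<ge> 0" "X \<ge> 0" "Y \<ge> 0" "C \<ge> 0" "D \<ge> 0" "Z \<ge> 0" "W \<ge> 0"
  and sm: "A+B+X+Y+C+D+Z+W = 1" and h: "A*B \<le> X*Y"
  shows "A*B*C*D \<le> 1/1024"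
    and "A*B*C*D = 1/1024 \<Longrightarrow> A = 1/8 \<and> B = 1/8 \<and> X = 1/8 \<and> Y = 1/8 \<and> C = 1/4 \<and> D = 1/4 \<and> Z = 0 \<and> W = 0"
proof -
  define uu vv s0 s1 where "uu = A+B" and "vv = X+Y" and "s0 = A+B+X+Y" and "s1 = C+D+Z+W"
  have s01: "s0 + s1 = 1" using sm by (simp add: s0_def s1_def)
  have uv0: "uu \<ge> 0" "vv \<ge> 0" using nn by (simp_all add: uu_def vv_def)
  have P0: "A*B \<ge> 0" using nn by simp
  have CD0: "C*D \<ge> 0" using nn by simp
  have i1: "4*(A*B) \<le> uu^2" unfolding uu_def power2_eq_square using zero_le_power2[of "A-B"] by (simp add: algebra_simps power2_eq_square)
  have i2: "4*(A*B) \<le> vv^2"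
  proof -
    have "4*(X*Y) \<le> vv^2" unfolding vv_def using zero_le_power2[of "X-Y"] by (simp add: algebra_simps power2_eq_square)
    then show ?thesis using h by linarith
  qed
  have i3: "16*(A*B) \<le> s0^2"
  proof -
    have "s0 = uu + vv" by (simp add: s0_def uu_def vv_def)
    moreover have "uu* vv \<ge> 4*(A*B)"
    proof (cases "uu \<le> vv")
      case True
      then have "uu*uu \<le> uu* vv" using uv0 by (simp add: mult_left_mono)
      then show ?thesis using i1 by (simp add: power2_eq_square)
    next
      case False
      then have "vv* vv \<le> uu* vv" using uv0 by (simp add: mult_right_mono)
      then show ?thesis using i2 by (simp add: power2_eq_square)
    qed
    ultimately show ?thesis using i1 i2 by (simp add: power2_eq_square algebra_simps)
  qed
  have i4: "4*(C*D) \<le> s1^2"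
  proof -
    have "4*(C*D) \<le> (C+D)^2" using zero_le_power2[of "C-D"] by (simp add: algebra_simps power2_eq_square)
    also have "\<dots> \<le> s1^2" using nn by (intro power_mono) (simp_all add: s1_def)
    finally show ?thesis .
  qed
  have ss: "s0 * s1 \<le> 1/4"
  proof -
    have "(s0 + s1)^2 = 1" using s01 by simp
    then show ?thesis using zero_le_power2[of "s0 - s1"] by (simp add: algebra_simps power2_eq_square)
  qed
  have ss0: "s0 * s1 \<ge> 0" using nn by (simp add: s0_def s1_def)
  have m: "(16*(A*B))*(4*(C*D)) \<le> s0^2 * s1^2"
    using i3 i4 P0 CD0 by (intro mult_mono) simp_all
  have "s0^2 * s1^2 = (s0* s1)^2" by (simp add: power_mult_distrib)
  also have "\<dots> \<le> (1/4)^2" using ss ss0 by (intro power_mono) simp_all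
  finally have m2: "s0^2 * s1^2 \<le> 1/16" by (simp add: power2_eq_square)
  have r64: "(16*(A*B))*(4*(C*D)) = 64*(A*B*C*D)" by (simp add: algebra_simps)
  show "A*B*C*D \<le> 1/1024" using m m2 r64 by linarith
  assume eq: "A*B*C*D = 1/1024"
  have "(16*(A*B))*(4*(C*D)) = 1/16" using eq r64 by simp
  then have e1: "s0^2 * s1^2 = 1/16" using m m2 by linarith
  have ne: "(A*B)*(C*D) \<noteq> 0"
  proof
    assume "(A*B)*(C*D) = 0"
    then have "A*B*C*D = 0" by (metis mult.assoc)
    then show False using eq by simp
  qed
  have P1: "A*B > 0" and CD1: "C*D > 0" using ne P0 CD0 by (auto simp del: mult_eq_0_iff simp: less_le)
  have ps: "s0 * s1 = 1/4"
  proof -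
    have "(s0* s1)^2 = (1/4)^2" using e1 by (simp add: power_mult_distrib power2_eq_square mult_ac)
    then show ?thesis using ss0 by (simp add: power2_eq_iff_nonneg)
  qed
  have s0h: "s0 = 1/2" and s1h: "s1 = 1/2"
  proof -
    have "(s0 - s1)^2 = (s0+s1)^2 - 4*(s0* s1)" by (simp add: algebra_simps power2_eq_square)
    then have "(s0 - s1)^2 = 0" using s01 ps by simp
    then have "s0 = s1" by simp
    then show "s0 = 1/2" "s1 = 1/2" using s01 by simp_all
  qed
  have f1: "16*(A*B) = s0^2"
  proof (rule ccontr)
    assume "16*(A*B) \<noteq> s0^2"
    then have lt: "16*(A*B) < s0^2" using i3 by simp
    have "(16*(A*B))*(4*(C*D)) < s0^2*(4*(C*D))" using lt CD1 by (intro mult_strict_right_mono) simp_all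
    also have "\<dots> \<le> s0^2* s1^2" using i4 by (intro mult_left_mono) simp_all
    finally show False using \<open>(16*(A*B))*(4*(C*D)) = 1/16\<close> e1 by simp
  qed
  have f2: "4*(C*D) = s1^2"
  proof (rule ccontr)
    assume "4*(C*D) \<noteq> s1^2"
    then have lt: "4*(C*D) < s1^2" using i4 by simp
    have "(16*(A*B))*(4*(C*D)) < (16*(A*B))* s1^2" using lt P1 by (intro mult_strict_left_mono) simp_all
    also have "\<dots> \<le> s0^2* s1^2" using i3 by (intro mult_right_mono) simp_all
    finally show False using \<open>(16*(A*B))*(4*(C*D)) = 1/16\<close> e1 by simp
  qed
  have CD: "C*D = 1/16" using f2 s1h by (simp add: power2_eq_square)
  have AB: "A*B = 1/64" using f1 s0h by (simp add: power2_eq_square)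
  have cd2: "C + D = 1/2"
  proof -
    have g1: "(C+D)^2 \<ge> (1/2)^2" using zero_le_power2[of "C-D"] CD by (simp add: algebra_simps power2_eq_square)
    have g2: "C + D \<le> 1/2" using s1h nn by (simp add: s1_def)
    have g3: "C + D \<ge> 0" using nn by simp
    have "1/2 \<le> C + D" using g1 g3 by (rule power2_le_imp_le)
    then show ?thesis using g2 by simp
  qed
  have "Z + W = 0" using cd2 s1h by (simp add: s1_def)
  then have ZW: "Z = 0" "W = 0" using nn by linarith+
  have CDe: "C = 1/4" "D = 1/4"
  proof -
    have "(C - D)^2 = (C+D)^2 - 4*(C*D)" by (simp add: algebra_simps power2_eq_square)
    then have "(C - D)^2 = 0" using cd2 CD by (simp add: power2_eq_square)
    then show "C = 1/4" "D = 1/4" using cd2 by simp_all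
  qed
  have uv2: "uu + vv = 1/2" using s0h by (simp add: s0_def uu_def vv_def)
  have u14: "uu \<ge> 1/4" and v14: "vv \<ge> 1/4"
  proof -
    have "(1/4)^2 \<le> uu^2" using i1 AB by (simp add: power2_eq_square)
    then show "uu \<ge> 1/4" using uv0(1) by (rule power2_le_imp_le)
    have "(1/4)^2 \<le> vv^2" using i2 AB by (simp add: power2_eq_square)
    then show "vv \<ge> 1/4" using uv0(2) by (rule power2_le_imp_le)
  qed
  have ue: "uu = 1/4" and ve: "vv = 1/4" using uv2 u14 v14 by simp_all
  have ABe: "A = 1/8" "B = 1/8"
  proof -
    have sAB: "A + B = 1/4" using ue by (simp add: uu_def)
    have "(A - B)^2 = (A+B)^2 - 4*(A*B)" by (simp add: algebra_simps power2_eq_square)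
    also have "\<dots> = (1/4)^2 - 4*(1/64)" by (simp only: sAB AB)
    also have "\<dots> = 0" by (simp add: power2_eq_square)
    finally have "(A - B)^2 = 0" .
    then show "A = 1/8" "B = 1/8" using ue by (simp_all add: uu_def)
  qed
  have XYe: "X = 1/8" "Y = 1/8"
  proof -
    have sXY: "X + Y = 1/4" using ve by (simp add: vv_def)
    have xy: "X*Y \<ge> 1/64" using h AB by simp
    have "(X - Y)^2 = (X+Y)^2 - 4*(X*Y)" by (simp add: algebra_simps power2_eq_square)
    also have "\<dots> = (1/4)^2 - 4*(X*Y)" by (simp only: sXY)
    also have "\<dots> \<le> 0" using xy by (simp add: power2_eq_square)
    finally have "(X - Y)^2 \<le> 0" .
    then have "X = Y" by simp
    then show "X = 1/8" "Y = 1/8" using ve by (simp_all add: vv_def)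
  qed
  show "A = 1/8 \<and> B = 1/8 \<and> X = 1/8 \<and> Y = 1/8 \<and> C = 1/4 \<and> D = 1/4 \<and> Z = 0 \<and> W = 0"
    using ABe XYe CDe ZW by simp
qed


lemma M33_QQ:
  assumes "q \<in> M33"
  obtains a b c where "\<forall>r i. 0 \<le> a r i \<and> 0 \<le> b r i \<and> 0 \<le> c r i" "\<And>i j k. q (i,j,k) = QQ a b c i j k"
  using assms unfolding M33_def QQ_def by blast

lemma simplex_nn: "q \<in> simplex7 \<Longrightarrow> q x \<ge> 0" by (cases x) (auto simp: simplex7_def)

lemma simplex_sum: "q \<in> simplex7 \<Longrightarrow> q (False,False,False) + q (False,False,True) + q (False,True,False) + q (False,True,True)
   + q (True,False,False) + q (True,False,True) + q (True,True,False) + q (True,True,True) = 1"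
  by (simp add: simplex7_def sum8)

abbreviation PP :: "tensor \<Rightarrow> real" where
  "PP q \<equiv> q (False,False,False) * q (False,True,True) * q (True,False,True) * q (True,True,False)"

lemma LB_core:
  assumes qM: "q \<in> M33"
  shows "PP q \<le> 1/1024" and "PP q = 1/1024 \<Longrightarrow> q \<in> {q10, q11, q20, q21, q30, q31}"
proof -
  obtain a b c where nn: "\<forall>r i. 0 \<le> a r i \<and> 0 \<le> b r i \<and> 0 \<le> c r i" and qe: "\<And>i j k. q (i,j,k) = QQ a b c i j k"
    using M33_QQ[OF qM] by blast
  have qs: "q \<in> simplex7" using qM by (simp add: M33_def)
  have np: "\<not> pat (QQ a b c)" using sign_lemma[OF nn] .
  then have cases6: "q (False,False,False) * q (False,True,True) \<le> q (False,False,True) * q (False,True,False) \<or>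
     q (True,False,True) * q (True,True,False) \<le> q (True,False,False) * q (True,True,True) \<or>
     q (False,False,False) * q (True,False,True) \<le> q (False,False,True) * q (True,False,False) \<or>
     q (False,True,True) * q (True,True,False) \<le> q (False,True,False) * q (True,True,True) \<or>
     q (False,False,False) * q (True,True,False) \<le> q (False,True,False) * q (True,False,False) \<or>
     q (False,True,True) * q (True,False,True) \<le> q (False,False,True) * q (True,True,True)"
    unfolding pat_def qe[symmetric] by (auto simp: not_less algebra_simps)
  note nnq = simplex_nn[OF qs] and sq = simplex_sum[OF qs]
  have "PP q \<le> 1/1024 \<and> (PP q = 1/1024 \<longrightarrow> q \<in> {q10, q11, q20, q21, q30, q31})"
    using cases6
  proof (elim disjE)
    assume h: "q (False,False,False) * q (False,True,True) \<le> q (False,False,True) * q (False,True,False)"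
    note f = face[of "q (False,False,False)" "q (False,True,True)" "q (False,False,True)" "q (False,True,False)"
       "q (True,False,True)" "q (True,True,False)" "q (True,False,False)" "q (True,True,True)", OF nnq nnq nnq nnq nnq nnq nnq nnq _ h]
    have s: "q (False,False,False) + q (False,True,True) + q (False,False,True) + q (False,True,False) +
       q (True,False,True) + q (True,True,False) + q (True,False,False) + q (True,True,True) = 1" using sq by linarith
    have pe: "PP q = (q (False,False,False))*(q (False,True,True))*(q (True,False,True))*(q (True,True,False))" by (simp add: mult_ac)
    show ?thesis
    proof (intro conjI impI)
      show "PP q \<le> 1/1024" using f(1)[OF s] pe by linarith
      assume "PP q = 1/1024"
      have e: "(q (False,False,False))*(q (False,True,True))*(q (True,False,True))*(q (True,True,False)) = 1/1024" using pe \<open>PP q = 1/1024\<close> by linarith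
      have v: "(q (False,False,False)) = 1/8 \<and> (q (False,True,True)) = 1/8 \<and> (q (False,False,True)) = 1/8 \<and> (q (False,True,False)) = 1/8 \<and> (q (True,False,True)) = 1/4 \<and> (q (True,True,False)) = 1/4 \<and> (q (True,False,False)) = 0 \<and> (q (True,True,True)) = 0"
        using f(2)[OF s e] by simp
      have "q = q10" using v by (intro tensor_eq8) (simp_all add: q10_def mix_def)
      then show "q \<in> {q10, q11, q20, q21, q30, q31}" by simp
    qed
  next
    assume h: "q (True,False,True) * q (True,True,False) \<le> q (True,False,False) * q (True,True,True)"
    note f = face[of "q (True,False,True)" "q (True,True,False)" "q (True,False,False)" "q (True,True,True)"
       "q (False,False,False)" "q (False,True,True)" "q (False,False,True)" "q (False,True,False)", OF nnq nnq nnq nnq nnq nnq nnq nnq _ h]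
    have s: "q (True,False,True) + q (True,True,False) + q (True,False,False) + q (True,True,True) +
       q (False,False,False) + q (False,True,True) + q (False,False,True) + q (False,True,False) = 1" using sq by linarith
    have pe: "PP q = (q (True,False,True))*(q (True,True,False))*(q (False,False,False))*(q (False,True,True))" by (simp add: mult_ac)
    show ?thesis
    proof (intro conjI impI)
      show "PP q \<le> 1/1024" using f(1)[OF s] pe by linarith
      assume "PP q = 1/1024"
      have e: "(q (True,False,True))*(q (True,True,False))*(q (False,False,False))*(q (False,True,True)) = 1/1024" using pe \<open>PP q = 1/1024\<close> by linarith
      have v: "(q (True,False,True)) = 1/8 \<and> (q (True,True,False)) = 1/8 \<and> (q (True,False,False)) = 1/8 \<and> (q (True,True,True)) = 1/8 \<and> (q (False,False,False)) = 1/4 \<and> (q (False,True,True)) = 1/4 \<and> (q (False,False,True)) = 0 \<and> (q (False,True,False)) = 0"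
        using f(2)[OF s e] by simp
      have "q = q11" using v by (intro tensor_eq8) (simp_all add: q11_def mix_def)
      then show "q \<in> {q10, q11, q20, q21, q30, q31}" by simp
    qed
  next
    assume h: "q (False,False,False) * q (True,False,True) \<le> q (False,False,True) * q (True,False,False)"
    note f = face[of "q (False,False,False)" "q (True,False,True)" "q (False,False,True)" "q (True,False,False)"
       "q (False,True,True)" "q (True,True,False)" "q (False,True,False)" "q (True,True,True)", OF nnq nnq nnq nnq nnq nnq nnq nnq _ h]
    have s: "q (False,False,False) + q (True,False,True) + q (False,False,True) + q (True,False,False) +
       q (False,True,True) + q (True,True,False) + q (False,True,False) + q (True,True,True) = 1" using sq by linarith
    have pe: "PP q = (q (False,False,False))*(q (True,False,True))*(q (False,True,True))*(q (True,True,False))" by (simp add: mult_ac)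
    show ?thesis
    proof (intro conjI impI)
      show "PP q \<le> 1/1024" using f(1)[OF s] pe by linarith
      assume "PP q = 1/1024"
      have e: "(q (False,False,False))*(q (True,False,True))*(q (False,True,True))*(q (True,True,False)) = 1/1024" using pe \<open>PP q = 1/1024\<close> by linarith
      have v: "(q (False,False,False)) = 1/8 \<and> (q (True,False,True)) = 1/8 \<and> (q (False,False,True)) = 1/8 \<and> (q (True,False,False)) = 1/8 \<and> (q (False,True,True)) = 1/4 \<and> (q (True,True,False)) = 1/4 \<and> (q (False,True,False)) = 0 \<and> (q (True,True,True)) = 0"
        using f(2)[OF s e] by simp
      have "q = q20" using v by (intro tensor_eq8) (simp_all add: q20_def mix_def)
      then show "q \<in> {q10, q11, q20, q21, q30, q31}" by simp
    qed
  next
    assume h: "q (False,True,True) * q (True,True,False) \<le> q (False,True,False) * q (True,True,True)"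
    note f = face[of "q (False,True,True)" "q (True,True,False)" "q (False,True,False)" "q (True,True,True)"
       "q (False,False,False)" "q (True,False,True)" "q (False,False,True)" "q (True,False,False)", OF nnq nnq nnq nnq nnq nnq nnq nnq _ h]
    have s: "q (False,True,True) + q (True,True,False) + q (False,True,False) + q (True,True,True) +
       q (False,False,False) + q (True,False,True) + q (False,False,True) + q (True,False,False) = 1" using sq by linarith
    have pe: "PP q = (q (False,True,True))*(q (True,True,False))*(q (False,False,False))*(q (True,False,True))" by (simp add: mult_ac)
    show ?thesis
    proof (intro conjI impI)
      show "PP q \<le> 1/1024" using f(1)[OF s] pe by linarith
      assume "PP q = 1/1024"
      have e: "(q (False,True,True))*(q (True,True,False))*(q (False,False,False))*(q (True,False,True)) = 1/1024" using pe \<open>PP q = 1/1024\<close> by linarith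
      have v: "(q (False,True,True)) = 1/8 \<and> (q (True,True,False)) = 1/8 \<and> (q (False,True,False)) = 1/8 \<and> (q (True,True,True)) = 1/8 \<and> (q (False,False,False)) = 1/4 \<and> (q (True,False,True)) = 1/4 \<and> (q (False,False,True)) = 0 \<and> (q (True,False,False)) = 0"
        using f(2)[OF s e] by simp
      have "q = q21" using v by (intro tensor_eq8) (simp_all add: q21_def mix_def)
      then show "q \<in> {q10, q11, q20, q21, q30, q31}" by simp
    qed
  next
    assume h: "q (False,False,False) * q (True,True,False) \<le> q (False,True,False) * q (True,False,False)"
    note f = face[of "q (False,False,False)" "q (True,True,False)" "q (False,True,False)" "q (True,False,False)"
       "q (False,True,True)" "q (True,False,True)" "q (False,False,True)" "q (True,True,True)", OF nnq nnq nnq nnq nnq nnq nnq nnq _ h]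
    have s: "q (False,False,False) + q (True,True,False) + q (False,True,False) + q (True,False,False) +
       q (False,True,True) + q (True,False,True) + q (False,False,True) + q (True,True,True) = 1" using sq by linarith
    have pe: "PP q = (q (False,False,False))*(q (True,True,False))*(q (False,True,True))*(q (True,False,True))" by (simp add: mult_ac)
    show ?thesis
    proof (intro conjI impI)
      show "PP q \<le> 1/1024" using f(1)[OF s] pe by linarith
      assume "PP q = 1/1024"
      have e: "(q (False,False,False))*(q (True,True,False))*(q (False,True,True))*(q (True,False,True)) = 1/1024" using pe \<open>PP q = 1/1024\<close> by linarith
      have v: "(q (False,False,False)) = 1/8 \<and> (q (True,True,False)) = 1/8 \<and> (q (False,True,False)) = 1/8 \<and> (q (True,False,False)) = 1/8 \<and> (q (False,True,True)) = 1/4 \<and> (q (True,False,True)) = 1/4 \<and> (q (False,False,True)) = 0 \<and> (q (True,True,True)) = 0"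
        using f(2)[OF s e] by simp
      have "q = q30" using v by (intro tensor_eq8) (simp_all add: q30_def mix_def)
      then show "q \<in> {q10, q11, q20, q21, q30, q31}" by simp
    qed
  next
    assume h: "q (False,True,True) * q (True,False,True) \<le> q (False,False,True) * q (True,True,True)"
    note f = face[of "q (False,True,True)" "q (True,False,True)" "q (False,False,True)" "q (True,True,True)"
       "q (False,False,False)" "q (True,True,False)" "q (False,True,False)" "q (True,False,False)", OF nnq nnq nnq nnq nnq nnq nnq nnq _ h]
    have s: "q (False,True,True) + q (True,False,True) + q (False,False,True) + q (True,True,True) +
       q (False,False,False) + q (True,True,False) + q (False,True,False) + q (True,False,False) = 1" using sq by linarith
    have pe: "PP q = (q (False,True,True))*(q (True,False,True))*(q (False,False,False))*(q (True,True,False))" by (simp add: mult_ac)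
    show ?thesis
    proof (intro conjI impI)
      show "PP q \<le> 1/1024" using f(1)[OF s] pe by linarith
      assume "PP q = 1/1024"
      have e: "(q (False,True,True))*(q (True,False,True))*(q (False,False,False))*(q (True,True,False)) = 1/1024" using pe \<open>PP q = 1/1024\<close> by linarith
      have v: "(q (False,True,True)) = 1/8 \<and> (q (True,False,True)) = 1/8 \<and> (q (False,False,True)) = 1/8 \<and> (q (True,True,True)) = 1/8 \<and> (q (False,False,False)) = 1/4 \<and> (q (True,True,False)) = 1/4 \<and> (q (False,True,False)) = 0 \<and> (q (True,False,False)) = 0"
        using f(2)[OF s e] by simp
      have "q = q31" using v by (intro tensor_eq8) (simp_all add: q31_def mix_def)
      then show "q \<in> {q10, q11, q20, q21, q30, q31}" by simp
    qed
  qed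
  then show "PP q \<le> 1/1024" and "PP q = 1/1024 \<Longrightarrow> q \<in> {q10, q11, q20, q21, q30, q31}" by auto
qed


definition VV :: "tensor \<Rightarrow> real" where
  "VV q = 1/4 * ln ((1/4) / q (False,False,False)) + 1/4 * ln ((1/4) / q (False,True,True))
        + 1/4 * ln ((1/4) / q (True,False,True)) + 1/4 * ln ((1/4) / q (True,True,False))"

lemma uplus_vals: "u_plus (False,False,False) = 1/4" "u_plus (False,True,True) = 1/4" "u_plus (True,False,True) = 1/4"
  "u_plus (True,True,False) = 1/4" "u_plus (False,False,True) = 0" "u_plus (False,True,False) = 0"
  "u_plus (True,False,False) = 0" "u_plus (True,True,True) = 0"
  by (simp_all add: u_plus_def)

lemma KL_uplus_pos:
  assumes "q (False,False,False) > 0" "q (False,True,True) > 0" "q (True,False,True) > 0" "q (True,True,False) > 0"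
  shows "KL u_plus q = ereal (VV q)"
  using assms unfolding KL_def ex8 sum8 uplus_vals VV_def by simp

lemma KL_uplus_zero:
  assumes "q (False,False,False) = 0 \<or> q (False,True,True) = 0 \<or> q (True,False,True) = 0 \<or> q (True,True,False) = 0"
  shows "KL u_plus q = \<infinity>"
  using assms unfolding KL_def ex8 uplus_vals by auto

lemma ln_q: "(x::real) > 0 \<Longrightarrow> ln ((1/4)/x) = ln (1/4) - ln x"
  using ln_div[of "1/4" x] by simp

lemma VV_eq:
  assumes "q (False,False,False) > 0" "q (False,True,True) > 0" "q (True,False,True) > 0" "q (True,True,False) > 0"
  shows "VV q = - 2 * ln 2 - ln (PP q) / 4"
proof -
  have l4: "ln (1/4::real) = - 2 * ln 2"
  proof -
    have "ln (1/4::real) = - ln 4" by (simp add: ln_div)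
    moreover have "ln (4::real) = 2 * ln 2" using ln_realpow[of 2 2] by simp
    ultimately show ?thesis by simp
  qed
  have "ln (PP q) = ln (q (False,False,False)) + ln (q (False,True,True)) + ln (q (True,False,True)) + ln (q (True,True,False))"
    using assms by (simp add: ln_mult)
  moreover have "VV q = 1/4 * (ln (1/4) - ln (q (False,False,False))) + 1/4 * (ln (1/4) - ln (q (False,True,True)))
        + 1/4 * (ln (1/4) - ln (q (True,False,True))) + 1/4 * (ln (1/4) - ln (q (True,True,False)))"
    unfolding VV_def by (simp only: ln_q[OF assms(1)] ln_q[OF assms(2)] ln_q[OF assms(3)] ln_q[OF assms(4)])
  ultimately show ?thesis using l4 by (simp add: field_simps)
qed

lemma ln1024: "ln (1/1024::real) = - 10 * ln 2"
proof -
  have "ln (1024::real) = 10 * ln 2" using ln_realpow[of 2 10] by simp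
  then show ?thesis by (simp add: ln_div)
qed

lemma KL_LB:
  assumes qM: "q \<in> M33"
  shows "KL u_plus q \<ge> ereal (ln 2 / 2)"
    and "KL u_plus q = ereal (ln 2 / 2) \<Longrightarrow> q \<in> {q10, q11, q20, q21, q30, q31}"
proof -
  note lb = LB_core[OF qM]
  have qs: "q \<in> simplex7" using qM by (simp add: M33_def)
  note nnq = simplex_nn[OF qs]
  have "KL u_plus q \<ge> ereal (ln 2 / 2) \<and> (KL u_plus q = ereal (ln 2 / 2) \<longrightarrow> q \<in> {q10, q11, q20, q21, q30, q31})"
  proof (cases "q (False,False,False) > 0 \<and> q (False,True,True) > 0 \<and> q (True,False,True) > 0 \<and> q (True,True,False) > 0")
    case True
    then have pos: "PP q > 0" by simp
    have K: "KL u_plus q = ereal (VV q)" using True KL_uplus_pos by blast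
    have V: "VV q = - 2 * ln 2 - ln (PP q) / 4" using True VV_eq by blast
    have lnle: "ln (PP q) \<le> - 10 * ln 2" using lb(1) pos ln1024 by (metis ln_le_cancel_iff zero_less_divide_1_iff zero_less_numeral)
    have ge: "VV q \<ge> ln 2 / 2" using V lnle by simp
    show ?thesis
    proof (intro conjI impI)
      show "KL u_plus q \<ge> ereal (ln 2 / 2)" using K ge by simp
      assume "KL u_plus q = ereal (ln 2 / 2)"
      then have "VV q = ln 2 / 2" using K by simp
      then have "ln (PP q) = ln (1/1024)" using V ln1024 by simp
      then have "PP q = 1/1024" using pos by simp
      then show "q \<in> {q10, q11, q20, q21, q30, q31}" using lb(2) by blast
    qed
  next
    case False
    then have "q (False,False,False) = 0 \<or> q (False,True,True) = 0 \<or> q (True,False,True) = 0 \<or> q (True,True,False) = 0"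
      using nnq[of "(False,False,False)"] nnq[of "(False,True,True)"] nnq[of "(True,False,True)"] nnq[of "(True,True,False)"]
      by (auto simp: less_le)
    then have "KL u_plus q = \<infinity>" by (rule KL_uplus_zero)
    then show ?thesis by simp
  qed
  then show "KL u_plus q \<ge> ereal (ln 2 / 2)"
    and "KL u_plus q = ereal (ln 2 / 2) \<Longrightarrow> q \<in> {q10, q11, q20, q21, q30, q31}" by auto
qed


definition ind :: "bool \<Rightarrow> bool \<Rightarrow> real" where "ind v x = (if x = v then 1 else 0)"
definition trip :: "'a \<Rightarrow> 'a \<Rightarrow> 'a \<Rightarrow> nat \<Rightarrow> 'a" where
  "trip f0 f1 f2 r = (if r = 0 then f0 else if r = 1 then f1 else f2)"

lemma M33I:
  assumes "q \<in> simplex7" "\<forall>r i. 0 \<le> a r i \<and> 0 \<le> b r i \<and> 0 \<le> c r i" "\<forall>i j k. q (i,j,k) = QQ a b c i j k"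
  shows "q \<in> M33"
  using assms unfolding M33_def QQ_def by blast

lemma all_bool3: "(\<forall>i j k. P i j k) \<longleftrightarrow> P False False False \<and> P False False True \<and> P False True False \<and> P False True True
   \<and> P True False False \<and> P True False True \<and> P True True False \<and> P True True True"
  by (metis (full_types))

lemma trip_nn: "(\<forall>r i. 0 \<le> trip f0 f1 f2 r i) \<longleftrightarrow> (\<forall>i. 0 \<le> f0 i \<and> 0 \<le> f1 i \<and> 0 \<le> (f2 i :: real))"
  unfolding trip_def by auto

lemma mix_simplex: "q \<in> {q10, q11, q20, q21, q30, q31} \<Longrightarrow> q \<in> simplex7"
  by (auto simp: simplex7_def sum8 q10_def q11_def q20_def q21_def q30_def q31_def mix_def)

lemma six_M33: "q \<in> {q10, q11, q20, q21, q30, q31} \<Longrightarrow> q \<in> M33"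
proof (elim insertE emptyE)
  assume q: "q = q10"
  show "q \<in> M33"
    by (rule M33I[where a="trip (\<lambda>i. ind False i / 8) (\<lambda>i. ind True i / 4) (\<lambda>i. ind True i / 4)"
        and b="trip (\<lambda>_. 1) (ind False) (ind True)" and c="trip (\<lambda>_. 1) (ind True) (ind False)"])
      (use q mix_simplex in \<open>auto simp: trip_nn ind_def all_bool3 QQ3 q10_def mix_def trip_def\<close>)
next
  assume q: "q = q11"
  show "q \<in> M33"
    by (rule M33I[where a="trip (\<lambda>i. ind True i / 8) (\<lambda>i. ind False i / 4) (\<lambda>i. ind False i / 4)"
        and b="trip (\<lambda>_. 1) (ind True) (ind False)" and c="trip (\<lambda>_. 1) (ind True) (ind False)"])
      (use q mix_simplex in \<open>auto simp: trip_nn ind_def all_bool3 QQ3 q11_def mix_def trip_def\<close>)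
next
  assume q: "q = q20"
  show "q \<in> M33"
    by (rule M33I[where a="trip (\<lambda>_. 1) (\<lambda>i. ind False i / 4) (\<lambda>i. ind True i / 4)"
        and b="trip (\<lambda>j. ind False j / 8) (ind True) (ind True)" and c="trip (\<lambda>_. 1) (ind True) (ind False)"])
      (use q mix_simplex in \<open>auto simp: trip_nn ind_def all_bool3 QQ3 q20_def mix_def trip_def\<close>)
next
  assume q: "q = q21"
  show "q \<in> M33"
    by (rule M33I[where a="trip (\<lambda>_. 1) (\<lambda>i. ind False i / 4) (\<lambda>i. ind True i / 4)"
        and b="trip (\<lambda>j. ind True j / 8) (ind False) (ind False)" and c="trip (\<lambda>_. 1) (ind False) (ind True)"])
      (use q mix_simplex in \<open>auto simp: trip_nn ind_def all_bool3 QQ3 q21_def mix_def trip_def\<close>)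
next
  assume q: "q = q30"
  show "q \<in> M33"
    by (rule M33I[where a="trip (\<lambda>_. 1) (\<lambda>i. ind False i / 4) (\<lambda>i. ind True i / 4)"
        and b="trip (\<lambda>_. 1) (ind True) (ind False)" and c="trip (\<lambda>k. ind False k / 8) (ind True) (ind True)"])
      (use q mix_simplex in \<open>auto simp: trip_nn ind_def all_bool3 QQ3 q30_def mix_def trip_def\<close>)
next
  assume q: "q = q31"
  show "q \<in> M33"
    by (rule M33I[where a="trip (\<lambda>_. 1) (\<lambda>i. ind False i / 4) (\<lambda>i. ind True i / 4)"
        and b="trip (\<lambda>_. 1) (ind False) (ind True)" and c="trip (\<lambda>k. ind True k / 8) (ind False) (ind False)"])
      (use q mix_simplex in \<open>auto simp: trip_nn ind_def all_bool3 QQ3 q31_def mix_def trip_def\<close>)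
qed

lemma six_KL: "q \<in> {q10, q11, q20, q21, q30, q31} \<Longrightarrow> KL u_plus q = ereal (ln 2 / 2)"
proof -
  assume q: "q \<in> {q10, q11, q20, q21, q30, q31}"
  have pos: "q (False,False,False) > 0" "q (False,True,True) > 0" "q (True,False,True) > 0" "q (True,True,False) > 0"
    using q by (auto simp: q10_def q11_def q20_def q21_def q30_def q31_def mix_def)
  have pp: "PP q = 1/1024"
    using q by (auto simp: q10_def q11_def q20_def q21_def q30_def q31_def mix_def)
  have "VV q = ln 2 / 2" using VV_eq[OF pos] pp ln1024 by simp
  then show ?thesis using KL_uplus_pos[OF pos] by simp
qed

lemma six_dets: "slice_det 1 False q10 = 0 \<and> slice_det 1 True q11 = 0
    \<and> slice_det 2 False q20 = 0 \<and> slice_det 2 True q21 = 0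
    \<and> slice_det 3 False q30 = 0 \<and> slice_det 3 True q31 = 0"
  by (simp add: slice_det_def q10_def q11_def q20_def q21_def q30_def q31_def mix_def)

lemma flip1_flip1: "flip1 (flip1 q) = q"
  by (simp add: flip1_def fun_eq_iff)

lemma flip1_simplex: "q \<in> simplex7 \<Longrightarrow> flip1 q \<in> simplex7"
  unfolding simplex7_def sum8 by (auto simp: flip1_def algebra_simps)

lemma flip1_M33: "q \<in> M33 \<Longrightarrow> flip1 q \<in> M33"
proof -
  assume qM: "q \<in> M33"
  obtain a b c where nn: "\<forall>r i. 0 \<le> a r i \<and> 0 \<le> b r i \<and> 0 \<le> c r i" and qe: "\<And>i j k. q (i,j,k) = QQ a b c i j k"
    using M33_QQ[OF qM] by blast
  show ?thesis
  proof (rule M33I[where a="\<lambda>r i. a r (\<not> i)" and b=b and c=c])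
    show "flip1 q \<in> simplex7" using qM flip1_simplex by (simp add: M33_def)
    show "\<forall>r i. 0 \<le> a r (\<not> i) \<and> 0 \<le> b r i \<and> 0 \<le> c r i" using nn by simp
    show "\<forall>i j k. flip1 q (i, j, k) = QQ (\<lambda>r i. a r (\<not> i)) b c i j k" using qe by (simp add: flip1_def QQ_def)
  qed
qed

lemma flip1_M33_iff: "flip1 q \<in> M33 \<longleftrightarrow> q \<in> M33"
  using flip1_M33 flip1_flip1 by metis

lemma KL_uminus: "KL u_minus q = KL u_plus (flip1 q)"
  unfolding KL_def ex8 sum8 by (simp add: u_minus_def u_plus_def flip1_def algebra_simps)

lemma KL_model_uplus: "KL_model u_plus = ereal (ln 2 / 2)"
proof -
  have "KL_model u_plus \<ge> ereal (ln 2 / 2)"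
    unfolding KL_model_def by (rule INF_greatest) (rule KL_LB(1))
  moreover have "KL_model u_plus \<le> ereal (ln 2 / 2)"
    unfolding KL_model_def using six_M33[of q10] six_KL[of q10] by (metis INF_lower insertI1)
  ultimately show ?thesis by simp
qed

lemma KL_model_uminus: "KL_model u_minus = ereal (ln 2 / 2)"
proof -
  have "KL_model u_minus \<ge> ereal (ln 2 / 2)"
    unfolding KL_model_def KL_uminus by (rule INF_greatest) (rule KL_LB(1), simp add: flip1_M33)
  moreover have "KL_model u_minus \<le> ereal (ln 2 / 2)"
  proof -
    have "flip1 q10 \<in> M33" using six_M33[of q10] flip1_M33 by simp
    moreover have "KL u_minus (flip1 q10) = ereal (ln 2 / 2)" using six_KL[of q10] by (simp add: KL_uminus flip1_flip1)
    ultimately show ?thesis unfolding KL_model_def by (metis INF_lower)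
  qed
  ultimately show ?thesis by simp
qed


definition klt :: "real \<Rightarrow> real \<Rightarrow> real" where
  "klt x y = (if x = 0 then 0 else x * ln (x / y))"

lemma term_split:
  assumes "0 \<le> x" "x \<le> r" "x \<le> c" "x \<le> m"
  shows "klt x (r*c/m) = klt x r + x * ln (m/(2*c)) + x * ln 2"
proof (cases "x = 0")
  case True then show ?thesis by (simp add: klt_def)
next
  case False
  then have pos: "x > 0" "r > 0" "c > 0" "m > 0" using assms by linarith+
  have e: "x / (r*c/m) = (x/r) * (m/(2*c)) * 2" using pos by (simp add: field_simps)
  have p1: "x/r > 0" "m/(2*c) > 0" using pos by simp_all
  have "ln (x / (r*c/m)) = ln ((x/r) * (m/(2*c)) * 2)" by (simp only: e)
  also have "\<dots> = ln ((x/r) * (m/(2*c))) + ln 2" by (rule ln_mult_pos[OF mult_pos_pos[OF p1]]) simp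
  also have "\<dots> = ln (x/r) + ln (m/(2*c)) + ln 2" using ln_mult_pos[OF p1] by simp
  finally have "ln (x / (r*c/m)) = ln (x/r) + ln (m/(2*c)) + ln 2" .
  then show ?thesis using False by (simp add: klt_def algebra_simps)
qed

lemma row_bound:
  assumes "0 \<le> x" "x \<le> r"
  shows "klt x r \<le> 0" and "klt x r = 0 \<Longrightarrow> x = 0 \<or> x = r"
proof -
  show "klt x r \<le> 0"
  proof (cases "x = 0")
    case True then show ?thesis by (simp add: klt_def)
  next
    case False
    then have "x > 0" "r > 0" using assms by linarith+
    then have "ln (x / r) \<le> 0" using assms by simp
    then show ?thesis using False \<open>x > 0\<close> by (simp add: klt_def mult_nonneg_nonpos)
  qed
  assume h: "klt x r = 0"
  show "x = 0 \<or> x = r"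
  proof (cases "x = 0")
    case True then show ?thesis by simp
  next
    case False
    then have "x > 0" "r > 0" using assms by linarith+
    then have "ln (x / r) = 0" using h False by (simp add: klt_def)
    then have "x / r = 1" using \<open>x > 0\<close> \<open>r > 0\<close> by simp
    then show ?thesis using \<open>r > 0\<close> by simp
  qed
qed

lemma col_bound:
  fixes c m :: real
  assumes "0 \<le> c" "c \<le> m"
  shows "c * ln (m/(2*c)) \<le> m/2 - c" and "m > 0 \<Longrightarrow> c * ln (m/(2*c)) = m/2 - c \<Longrightarrow> c = m/2"
proof -
  show "c * ln (m/(2*c)) \<le> m/2 - c"
  proof (cases "c = 0")
    case True then show ?thesis using assms by simp
  next
    case False
    then have pos: "c > 0" "m > 0" using assms by linarith+
    have "ln (m/(2*c)) \<le> m/(2*c) - 1" using pos by (intro ln_le_minus_one) simp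
    then have "c * ln (m/(2*c)) \<le> c * (m/(2*c) - 1)" using pos by (simp add: mult_left_mono)
    also have "\<dots> = m/2 - c" using pos by (simp add: field_simps)
    finally show ?thesis .
  qed
  assume m: "m > 0" and h: "c * ln (m/(2*c)) = m/2 - c"
  show "c = m/2"
  proof (cases "c = 0")
    case True then show ?thesis using h m by simp
  next
    case False
    then have pos: "c > 0" using assms by linarith
    have "ln (m/(2*c)) = m/(2*c) - 1"
    proof -
      have e: "c * (m/(2*c) - 1) = m/2 - c" using pos by (simp add: field_simps)
      have "c * ln (m/(2*c)) = c * (m/(2*c) - 1)" using h e by simp
      then show ?thesis using pos by simp
    qed
    then have "m/(2*c) = 1" using pos m by (intro ln_eq_minus_one) simp_all
    then show ?thesis using pos by (simp add: field_simps)
  qed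
qed

lemma slice_bound:
  fixes x00 x01 x10 x11 :: real
  assumes nn: "0 \<le> x00" "0 \<le> x01" "0 \<le> x10" "0 \<le> x11"
  defines "m \<equiv> x00 + x01 + x10 + x11"
  defines "SF \<equiv> klt x00 ((x00+x01)*(x00+x10)/m) + klt x01 ((x00+x01)*(x01+x11)/m)
             + klt x10 ((x10+x11)*(x00+x10)/m) + klt x11 ((x10+x11)*(x01+x11)/m)"
  shows "SF \<le> m * ln 2"
    and "m > 0 \<Longrightarrow> SF = m * ln 2 \<Longrightarrow> (x00 = m/2 \<and> x11 = m/2 \<and> x01 = 0 \<and> x10 = 0) \<or> (x01 = m/2 \<and> x10 = m/2 \<and> x00 = 0 \<and> x11 = 0)"
proof -
  define c0 c1 r0 r1 where "c0 = x00 + x10" and "c1 = x01 + x11" and "r0 = x00 + x01" and "r1 = x10 + x11"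
  have SFe: "SF = (klt x00 r0 + klt x01 r0 + klt x10 r1 + klt x11 r1)
      + (c0 * ln (m/(2*c0)) + c1 * ln (m/(2*c1))) + m * ln 2"
  proof -
    have "SF = (klt x00 r0 + x00 * ln (m/(2*c0)) + x00 * ln 2) + (klt x01 r0 + x01 * ln (m/(2*c1)) + x01 * ln 2)
       + (klt x10 r1 + x10 * ln (m/(2*c0)) + x10 * ln 2) + (klt x11 r1 + x11 * ln (m/(2*c1)) + x11 * ln 2)"
      unfolding SF_def c0_def c1_def r0_def r1_def
      using nn by (subst term_split, simp_all add: m_def)+
    then show ?thesis by (simp add: c0_def c1_def m_def algebra_simps)
  qed
  have rb: "klt x00 r0 \<le> 0" "klt x01 r0 \<le> 0" "klt x10 r1 \<le> 0" "klt x11 r1 \<le> 0"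
    using nn row_bound(1) by (simp_all add: r0_def r1_def)
  have cb: "c0 * ln (m/(2*c0)) \<le> m/2 - c0" "c1 * ln (m/(2*c1)) \<le> m/2 - c1"
    using nn by (intro col_bound(1); simp add: c0_def c1_def m_def)+
  have mc: "m = c0 + c1" by (simp add: m_def c0_def c1_def)
  show "SF \<le> m * ln 2" using SFe rb cb mc by linarith
  assume m: "m > 0" and eq: "SF = m * ln 2"
  have rz: "klt x00 r0 = 0" "klt x01 r0 = 0" "klt x10 r1 = 0" "klt x11 r1 = 0"
    using SFe rb cb mc eq by linarith+
  have ce: "c0 * ln (m/(2*c0)) = m/2 - c0" "c1 * ln (m/(2*c1)) = m/2 - c1"
    using SFe rb cb mc eq by linarith+
  have c0h: "c0 = m/2" using col_bound(2)[OF _ _ m ce(1)] nn by (simp add: c0_def m_def)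
  have c1h: "c1 = m/2" using col_bound(2)[OF _ _ m ce(2)] nn by (simp add: c1_def m_def)
  have z1: "x00 = 0 \<or> x00 = r0" using row_bound(2)[of x00 r0] rz(1) nn by (simp add: r0_def)
  have z2: "x01 = 0 \<or> x01 = r0" using row_bound(2)[of x01 r0] rz(2) nn by (simp add: r0_def)
  have z3: "x10 = 0 \<or> x10 = r1" using row_bound(2)[of x10 r1] rz(3) nn by (simp add: r1_def)
  have z4: "x11 = 0 \<or> x11 = r1" using row_bound(2)[of x11 r1] rz(4) nn by (simp add: r1_def)
  note z = z1 z2 z3 z4
  show "(x00 = m/2 \<and> x11 = m/2 \<and> x01 = 0 \<and> x10 = 0) \<or> (x01 = m/2 \<and> x10 = m/2 \<and> x00 = 0 \<and> x11 = 0)"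
  proof (cases "x00 = 0")
    case True
    then have "x10 = m/2" using c0h by (simp add: c0_def)
    then have "x10 \<noteq> 0" using m by simp
    then have "x11 = 0" using z3 by (simp add: r1_def)
    then have "x01 = m/2" using c1h by (simp add: c1_def)
    then show ?thesis using True \<open>x10 = m/2\<close> \<open>x11 = 0\<close> by simp
  next
    case False
    then have "x01 = 0" using z1 by (simp add: r0_def)
    then have "x11 = m/2" using c1h by (simp add: c1_def)
    then have "x11 \<noteq> 0" using m by simp
    then have "x10 = 0" using z4 by (simp add: r1_def)
    then have "x00 = m/2" using c0h by (simp add: c0_def)
    then show ?thesis using \<open>x01 = 0\<close> \<open>x10 = 0\<close> \<open>x11 = m/2\<close> by simp
  qed
qed


definition rs :: "tensor \<Rightarrow> bool \<Rightarrow> bool \<Rightarrow> real" where "rs p j0 j = p (j0,j,False) + p (j0,j,True)"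
definition cs :: "tensor \<Rightarrow> bool \<Rightarrow> bool \<Rightarrow> real" where "cs p j0 k = p (j0,False,k) + p (j0,True,k)"
definition ms :: "tensor \<Rightarrow> bool \<Rightarrow> real" where "ms p j0 = rs p j0 False + rs p j0 True"
definition cons :: "tensor \<Rightarrow> bool \<Rightarrow> tensor" where
  "cons p j0 = (\<lambda>(i,j,k). if i = j0 then rs p j0 j * cs p j0 k / ms p j0 else p (i,j,k))"

definition SFd :: "tensor \<Rightarrow> bool \<Rightarrow> real" where
  "SFd p j0 = klt (p (j0,False,False)) (rs p j0 False * cs p j0 False / ms p j0)
            + klt (p (j0,False,True)) (rs p j0 False * cs p j0 True / ms p j0)
            + klt (p (j0,True,False)) (rs p j0 True * cs p j0 False / ms p j0)
            + klt (p (j0,True,True)) (rs p j0 True * cs p j0 True / ms p j0)"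

lemma klt_self: "klt x x = 0" by (simp add: klt_def)

lemma sum_ms: "(r0*c0 + r0*c1 + r1*c0 + r1*c1)/m = (m::real)" if "r0 + r1 = m" "c0 + c1 = m"
proof (cases "m = 0")
  case True then show ?thesis by simp
next
  case False
  have "r0*c0 + r0*c1 + r1*c0 + r1*c1 = (r0+r1)*(c0+c1)" by (simp add: algebra_simps)
  then show ?thesis using that False by simp
qed

lemma cons_simplex:
  assumes ps: "p \<in> simplex7"
  shows "cons p j0 \<in> simplex7"
proof -
  note nn = simplex_nn[OF ps] and s = simplex_sum[OF ps]
  have nn': "cons p j0 x \<ge> 0" for x
    using nn by (cases x) (auto simp: cons_def rs_def cs_def ms_def)
  have cs_m: "cs p j0 False + cs p j0 True = ms p j0" by (simp add: cs_def ms_def rs_def)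
  have e: "(rs p j0 False * cs p j0 False + rs p j0 False * cs p j0 True + rs p j0 True * cs p j0 False
     + rs p j0 True * cs p j0 True) / ms p j0 = ms p j0"
    by (rule sum_ms) (simp_all add: cs_m ms_def)
  have f: "rs p j0 False * cs p j0 False / ms p j0 + rs p j0 False * cs p j0 True / ms p j0
      + rs p j0 True * cs p j0 False / ms p j0 + rs p j0 True * cs p j0 True / ms p j0 = ms p j0"
    using e by (simp add: add_divide_distrib)
  have mse: "ms p j0 = p (j0,False,False) + p (j0,False,True) + p (j0,True,False) + p (j0,True,True)"
    by (simp add: ms_def rs_def)
  have c1: "cons p j0 (j0,j,k) = rs p j0 j * cs p j0 k / ms p j0" for j k by (simp add: cons_def)
  have c2: "cons p j0 (\<not>j0,j,k) = p (\<not>j0,j,k)" for j k by (simp add: cons_def)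
  have "(\<Sum>x\<in>UNIV. cons p j0 x) = 1"
  proof (cases j0)
    case True
    have "(\<Sum>x\<in>UNIV. cons p j0 x) = p (False,False,False) + p (False,False,True) + p (False,True,False) + p (False,True,True)
      + (rs p j0 False * cs p j0 False / ms p j0 + rs p j0 False * cs p j0 True / ms p j0
      + rs p j0 True * cs p j0 False / ms p j0 + rs p j0 True * cs p j0 True / ms p j0)"
      unfolding sum8 using c1 c2 True by simp
    then show ?thesis using f mse s True by simp
  next
    case False
    have "(\<Sum>x\<in>UNIV. cons p j0 x) = p (True,False,False) + p (True,False,True) + p (True,True,False) + p (True,True,True)
      + (rs p j0 False * cs p j0 False / ms p j0 + rs p j0 False * cs p j0 True / ms p j0
      + rs p j0 True * cs p j0 False / ms p j0 + rs p j0 True * cs p j0 True / ms p j0)"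
      unfolding sum8 using c1 c2 False by simp
    then show ?thesis using f mse s False by simp
  qed
  then show ?thesis using nn' by (simp add: simplex7_def)
qed


lemma cons_M33:
  assumes ps: "p \<in> simplex7"
  shows "cons p j0 \<in> M33"
proof (rule M33I[where a="trip (ind j0) (ind (\<not>j0)) (ind (\<not>j0))" and b="trip (rs p j0) (ind False) (ind True)"
      and c="trip (\<lambda>k. cs p j0 k / ms p j0) (\<lambda>k. p (\<not>j0,False,k)) (\<lambda>k. p (\<not>j0,True,k))"])
  note nn = simplex_nn[OF ps]
  show "cons p j0 \<in> simplex7" by (rule cons_simplex[OF ps])
  show "\<forall>r i. 0 \<le> trip (ind j0) (ind (\<not> j0)) (ind (\<not> j0)) r i \<and> 0 \<le> trip (rs p j0) (ind False) (ind True) r i \<and>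
          0 \<le> trip (\<lambda>k. cs p j0 k / ms p j0) (\<lambda>k. p (\<not> j0, False, k)) (\<lambda>k. p (\<not> j0, True, k)) r i"
    using nn by (auto simp: trip_def ind_def rs_def cs_def ms_def)
  show "\<forall>i j k. cons p j0 (i, j, k) = QQ (trip (ind j0) (ind (\<not> j0)) (ind (\<not> j0))) (trip (rs p j0) (ind False) (ind True))
          (trip (\<lambda>k. cs p j0 k / ms p j0) (\<lambda>k. p (\<not> j0, False, k)) (\<lambda>k. p (\<not> j0, True, k))) i j k"
    by (cases j0) (simp_all add: all_bool3 QQ3 trip_def ind_def cons_def)
qed

lemma rs_ge: "p \<in> simplex7 \<Longrightarrow> rs p j0 j \<ge> p (j0,j,k)"
  using simplex_nn[of p] by (cases k) (auto simp: rs_def)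
lemma cs_ge: "p \<in> simplex7 \<Longrightarrow> cs p j0 k \<ge> p (j0,j,k)"
  using simplex_nn[of p] by (cases j) (auto simp: cs_def)
lemma ms_ge: "p \<in> simplex7 \<Longrightarrow> ms p j0 \<ge> rs p j0 j"
  using simplex_nn[of p] by (cases j) (auto simp: rs_def ms_def)

lemma KL_cons:
  assumes ps: "p \<in> simplex7"
  shows "KL p (cons p j0) = ereal (SFd p j0)"
proof -
  have pos: "cons p j0 x > 0" if "p x > 0" for x
  proof -
    obtain i j k where x: "x = (i,j,k)" by (cases x) auto
    show ?thesis
    proof (cases "i = j0")
      case True
      have "rs p j0 j > 0" "cs p j0 k > 0" using rs_ge[OF ps, of j0 j k] cs_ge[OF ps, of j0 j k] that x True by simp_all
      moreover have "ms p j0 > 0" using ms_ge[OF ps, of j0 j] calculation by simp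
      ultimately show ?thesis using x True by (simp add: cons_def)
    next
      case False
      then show ?thesis using x that by (simp add: cons_def)
    qed
  qed
  then have ne: "\<not> (\<exists>x. p x > 0 \<and> cons p j0 x = 0)" by fastforce
  have "KL p (cons p j0) = ereal (\<Sum>x\<in>UNIV. klt (p x) (cons p j0 x))"
    using ne unfolding KL_def klt_def by simp
  also have "(\<Sum>x\<in>UNIV. klt (p x) (cons p j0 x)) = SFd p j0"
    unfolding sum8 SFd_def by (cases j0) (simp_all add: cons_def klt_self)
  finally show ?thesis .
qed

lemma SFd_bound:
  assumes ps: "p \<in> simplex7"
  shows "SFd p j0 \<le> ms p j0 * ln 2"
    and "ms p j0 > 0 \<Longrightarrow> SFd p j0 = ms p j0 * ln 2 \<Longrightarrow>
       (p (j0,False,False) = ms p j0/2 \<and> p (j0,True,True) = ms p j0/2 \<and> p (j0,False,True) = 0 \<and> p (j0,True,False) = 0) \<or>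
       (p (j0,False,True) = ms p j0/2 \<and> p (j0,True,False) = ms p j0/2 \<and> p (j0,False,False) = 0 \<and> p (j0,True,True) = 0)"
proof -
  note nn = simplex_nn[OF ps]
  note sb = slice_bound[OF nn nn nn nn, of "(j0,False,False)" "(j0,False,True)" "(j0,True,False)" "(j0,True,True)"]
  have m: "ms p j0 = p (j0,False,False) + p (j0,False,True) + p (j0,True,False) + p (j0,True,True)"
    by (simp add: ms_def rs_def)
  have S: "SFd p j0 = klt (p (j0,False,False)) ((p (j0,False,False) + p (j0,False,True)) * (p (j0,False,False) + p (j0,True,False)) / ms p j0)
      + klt (p (j0,False,True)) ((p (j0,False,False) + p (j0,False,True)) * (p (j0,False,True) + p (j0,True,True)) / ms p j0)
      + klt (p (j0,True,False)) ((p (j0,True,False) + p (j0,True,True)) * (p (j0,False,False) + p (j0,True,False)) / ms p j0)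
      + klt (p (j0,True,True)) ((p (j0,True,False) + p (j0,True,True)) * (p (j0,False,True) + p (j0,True,True)) / ms p j0)"
    by (simp add: SFd_def rs_def cs_def)
  show "SFd p j0 \<le> ms p j0 * ln 2" using sb(1) unfolding S m .
  assume a: "ms p j0 > 0" "SFd p j0 = ms p j0 * ln 2"
  show "(p (j0,False,False) = ms p j0/2 \<and> p (j0,True,True) = ms p j0/2 \<and> p (j0,False,True) = 0 \<and> p (j0,True,False) = 0) \<or>
       (p (j0,False,True) = ms p j0/2 \<and> p (j0,True,False) = ms p j0/2 \<and> p (j0,False,False) = 0 \<and> p (j0,True,True) = 0)"
    using sb(2) a unfolding S m by blast
qed


lemma KL_self: "KL p p = 0"
  unfolding KL_def by (simp add: sum.neutral)

lemma KL_model_le: "q \<in> M33 \<Longrightarrow> KL_model p \<le> KL p q"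
  unfolding KL_model_def by (rule INF_lower)

lemma UB_main:
  assumes ps: "p \<in> simplex7"
  shows "KL_model p \<le> ereal (ln 2 / 2)"
    and "KL_model p = ereal (ln 2 / 2) \<Longrightarrow> p = u_plus \<or> p = u_minus"
proof -
  note nn = simplex_nn[OF ps]
  have K: "KL_model p \<le> ereal (SFd p j)" for j
    using KL_model_le[OF cons_M33[OF ps, of j], of p] KL_cons[OF ps, of j] by simp
  note B = SFd_bound(1)[OF ps]
  have msum: "ms p False + ms p True = 1" using simplex_sum[OF ps] by (simp add: ms_def rs_def algebra_simps)
  have ms0: "ms p j \<ge> 0" for j using nn by (simp add: ms_def rs_def)
  have l2: "ln (2::real) > 0" by simp
  show "KL_model p \<le> ereal (ln 2 / 2)"
  proof (cases "ms p False \<le> 1/2")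
    case True
    have "SFd p False \<le> ln 2 / 2"
    proof -
      have "ms p False * ln 2 \<le> 1/2 * ln 2" using True l2 by (intro mult_right_mono) simp_all
      then show ?thesis using B[of False] by linarith
    qed
    then show ?thesis using K[of False] by (meson ereal_less_eq(3) order_trans)
  next
    case False
    then have T: "ms p True \<le> 1/2" using msum by simp
    have "SFd p True \<le> ln 2 / 2"
    proof -
      have "ms p True * ln 2 \<le> 1/2 * ln 2" using T l2 by (intro mult_right_mono) simp_all
      then show ?thesis using B[of True] by linarith
    qed
    then show ?thesis using K[of True] by (meson ereal_less_eq(3) order_trans)
  qed
  assume eq: "KL_model p = ereal (ln 2 / 2)"
  have ge: "SFd p j \<ge> ln 2 / 2" for j using K[of j] eq by simp
  have mge: "ms p j \<ge> 1/2" for j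
  proof -
    have "1/2 * ln 2 \<le> ms p j * ln 2" using ge[of j] B[of j] by linarith
    then show ?thesis using l2 by simp
  qed
  have mh: "ms p j = 1/2" for j using mge[of False] mge[of True] msum by (cases j) simp_all
  have Se: "SFd p j = ms p j * ln 2" for j
  proof -
    have "ms p j * ln 2 = ln 2 / 2" using mh[of j] by simp
    then show ?thesis using ge[of j] B[of j] by linarith
  qed
  have D: "(p (j,False,False) = 1/4 \<and> p (j,True,True) = 1/4 \<and> p (j,False,True) = 0 \<and> p (j,True,False) = 0) \<or>
       (p (j,False,True) = 1/4 \<and> p (j,True,False) = 1/4 \<and> p (j,False,False) = 0 \<and> p (j,True,True) = 0)" for j
    using SFd_bound(2)[OF ps, of j] mh[of j] Se[of j] by simp
  have nz: "\<not> (p \<in> M33)"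
  proof
    assume "p \<in> M33"
    then have "KL_model p \<le> 0" using KL_model_le[of p p] KL_self[of p] by simp
    then show False using eq l2 by simp
  qed
  from D[of False] D[of True] show "p = u_plus \<or> p = u_minus"
  proof (elim disjE)
    assume a: "p (False,False,False) = 1/4 \<and> p (False,True,True) = 1/4 \<and> p (False,False,True) = 0 \<and> p (False,True,False) = 0"
      and b: "p (True,False,False) = 1/4 \<and> p (True,True,True) = 1/4 \<and> p (True,False,True) = 0 \<and> p (True,True,False) = 0"
    have "p \<in> M33"
      by (rule M33I[where a="trip (\<lambda>_. 1) (\<lambda>_. 1) (\<lambda>_. 0)" and b="trip (ind False) (ind True) (\<lambda>_. 0)"
          and c="trip (\<lambda>k. ind False k / 4) (\<lambda>k. ind True k / 4) (\<lambda>_. 0)"])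
        (use ps a b in \<open>auto simp: trip_nn ind_def all_bool3 QQ3 trip_def\<close>)
    then show ?thesis using nz by simp
  next
    assume a: "p (False,False,False) = 1/4 \<and> p (False,True,True) = 1/4 \<and> p (False,False,True) = 0 \<and> p (False,True,False) = 0"
      and b: "p (True,False,True) = 1/4 \<and> p (True,True,False) = 1/4 \<and> p (True,False,False) = 0 \<and> p (True,True,True) = 0"
    have "p = u_plus" using a b by (intro tensor_eq8) (simp_all add: u_plus_def)
    then show ?thesis by simp
  next
    assume a: "p (False,False,True) = 1/4 \<and> p (False,True,False) = 1/4 \<and> p (False,False,False) = 0 \<and> p (False,True,True) = 0"
      and b: "p (True,False,False) = 1/4 \<and> p (True,True,True) = 1/4 \<and> p (True,False,True) = 0 \<and> p (True,True,False) = 0"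
    have "p = u_minus" using a b by (intro tensor_eq8) (simp_all add: u_minus_def)
    then show ?thesis by simp
  next
    assume a: "p (False,False,True) = 1/4 \<and> p (False,True,False) = 1/4 \<and> p (False,False,False) = 0 \<and> p (False,True,True) = 0"
      and b: "p (True,False,True) = 1/4 \<and> p (True,True,False) = 1/4 \<and> p (True,False,False) = 0 \<and> p (True,True,True) = 0"
    have "p \<in> M33"
      by (rule M33I[where a="trip (\<lambda>_. 1) (\<lambda>_. 1) (\<lambda>_. 0)" and b="trip (ind False) (ind True) (\<lambda>_. 0)"
          and c="trip (\<lambda>k. ind True k / 4) (\<lambda>k. ind False k / 4) (\<lambda>_. 0)"])
        (use ps a b in \<open>auto simp: trip_nn ind_def all_bool3 QQ3 trip_def\<close>)
    then show ?thesis using nz by simp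
  qed
qed

lemma uplus_simplex: "u_plus \<in> simplex7" by (simp add: simplex7_def sum8 u_plus_def)
lemma uminus_simplex: "u_minus \<in> simplex7" by (simp add: simplex7_def sum8 u_minus_def)

theorem mainTheorem15:
  shows "(\<forall>p\<in>simplex7. KL_model p \<le> ereal (ln 2 / 2))
    \<and> {p \<in> simplex7. KL_model p = ereal (ln 2 / 2)} = {u_plus, u_minus}
    \<and> {q \<in> M33. KL u_plus q = KL_model u_plus} = {q10, q11, q20, q21, q30, q31}
    \<and> slice_det 1 False q10 = 0 \<and> slice_det 1 True q11 = 0
    \<and> slice_det 2 False q20 = 0 \<and> slice_det 2 True q21 = 0
    \<and> slice_det 3 False q30 = 0 \<and> slice_det 3 True q31 = 0
    \<and> {q \<in> M33. KL u_minus q = KL_model u_minus} = flip1 ` {q10, q11, q20, q21, q30, q31}"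
proof (intro conjI)
  show "\<forall>p\<in>simplex7. KL_model p \<le> ereal (ln 2 / 2)" using UB_main(1) by blast
  show "{p \<in> simplex7. KL_model p = ereal (ln 2 / 2)} = {u_plus, u_minus}"
    using UB_main(2) KL_model_uplus KL_model_uminus uplus_simplex uminus_simplex by blast
  show A: "{q \<in> M33. KL u_plus q = KL_model u_plus} = {q10, q11, q20, q21, q30, q31}"
    unfolding KL_model_uplus using KL_LB(2) six_M33 six_KL by blast
  show "slice_det 1 False q10 = 0" "slice_det 1 True q11 = 0"
    "slice_det 2 False q20 = 0" "slice_det 2 True q21 = 0"
    "slice_det 3 False q30 = 0" "slice_det 3 True q31 = 0" using six_dets by simp_all
  show "{q \<in> M33. KL u_minus q = KL_model u_minus} = flip1 ` {q10, q11, q20, q21, q30, q31}"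
  proof
    show "{q \<in> M33. KL u_minus q = KL_model u_minus} \<subseteq> flip1 ` {q10, q11, q20, q21, q30, q31}"
    proof
      fix q assume "q \<in> {q \<in> M33. KL u_minus q = KL_model u_minus}"
      then have "flip1 q \<in> M33" "KL u_plus (flip1 q) = ereal (ln 2 / 2)"
        using flip1_M33 KL_uminus KL_model_uminus by auto
      then have "flip1 q \<in> {q10, q11, q20, q21, q30, q31}" using KL_LB(2) by blast
      then show "q \<in> flip1 ` {q10, q11, q20, q21, q30, q31}" by (metis flip1_flip1 imageI)
    qed
    show "flip1 ` {q10, q11, q20, q21, q30, q31} \<subseteq> {q \<in> M33. KL u_minus q = KL_model u_minus}"
    proof
      fix q assume "q \<in> flip1 ` {q10, q11, q20, q21, q30, q31}"
      then obtain q' where q': "q' \<in> {q10, q11, q20, q21, q30, q31}" "q = flip1 q'" by blast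
      then show "q \<in> {q \<in> M33. KL u_minus q = KL_model u_minus}"
        using six_M33[OF q'(1)] six_KL[OF q'(1)] flip1_M33 KL_uminus KL_model_uminus flip1_flip1 by simp
    qed
  qed
qed


end
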